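(* Let $D_K$ be a relative $K$-entropy satisfying Properties (a) and (b) below, and let $H_K$ be the associated conditional entropy, defined by one of the two forms below. Let $V_A:\mathcal{H}_A\to\mathcal{H}_{A'}$ and $V_B:\mathcal{H}_B\to\mathcal{H}_{B'}$ be isometries, $\rho_{AB}$ a density operator, and $\rho_{A'B'}:=(V_A\otimes V_B)\rho_{AB}(V_A^\dagger\otimes V_B^\dagger)$. Then $H_K(A|B)=H_K(A'|B')$, where the left side is evaluated on $\rho_{AB}$ and the right side on $\rho_{A'B'}$.
   Context: All Hilbert spaces are finite-dimensional. A relative $K$-entropy $D_K$ assigns to every pair $(S,T)$ of positive semidefinite operators on a common Hilbert space an extended real number $D_K(S\|T)$. Properties: (a) for every trace-preserving completely positive map $\mathcal{E}$ (possibly between different spaces), $D_K(\mathcal{E}(S)\|\mathcal{E}(T))\le D_K(S\|T)$; (b) for positive semidefinite $S,T$ on $\mathcal{H}$ and $T'$ on $\mathcal{H}'$, $D_K(S\oplus 0\,\|\,T\oplus T')=D_K(S\|T)$. The conditional $K$-entropy of a density operator $\rho_{AB}$ is either $H_K(A|B)=-D_K(\rho_{AB}\|\mathbb{1}_A\otimes\rho_B)$ for all $\rho_{AB}$, or $H_K(A|B)=\max_{\sigma_B}[-D_K(\rho_{AB}\|\mathbb{1}_A\otimes\sigma_B)]$ for all $\rho_{AB}$, maximum over density operators $\sigma_B$. *)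

theory Defs
  imports "Jordan_Normal_Form.Schur_Decomposition" "HOL-Library.Extended_Real"
begin

text \<open>Operators on a d-dimensional Hilbert space C^d are complex d x d matrices.
  A composite system AB with dimensions dA, dB is C^(dA*dB), basis index i*dB + j.\<close>

definition mtrace :: "complex mat \<Rightarrow> complex" where
  "mtrace A = (\<Sum>i<dim_row A. A $$ (i,i))"

definition psd :: "nat \<Rightarrow> complex mat \<Rightarrow> bool" where
  "psd n A \<longleftrightarrow> A \<in> carrier_mat n n \<and>
     (\<forall>v \<in> carrier_vec n. conjugate v \<bullet> (A *\<^sub>v v) \<in> \<real> \<and> Re (conjugate v \<bullet> (A *\<^sub>v v)) \<ge> 0)"

definition density :: "nat \<Rightarrow> complex mat \<Rightarrow> bool" where
  "density n \<rho> \<longleftrightarrow> psd n \<rho> \<and> mtrace \<rho> = 1"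

definition isometry :: "nat \<Rightarrow> nat \<Rightarrow> complex mat \<Rightarrow> bool" where
  "isometry n m V \<longleftrightarrow> V \<in> carrier_mat m n \<and> mat_adjoint V * V = 1\<^sub>m n"

definition kron :: "complex mat \<Rightarrow> complex mat \<Rightarrow> complex mat" where
  "kron A B = mat (dim_row A * dim_row B) (dim_col A * dim_col B)
     (\<lambda>(i,j). A $$ (i div dim_row B, j div dim_col B) * B $$ (i mod dim_row B, j mod dim_col B))"

definition ptrace_A :: "nat \<Rightarrow> nat \<Rightarrow> complex mat \<Rightarrow> complex mat" where
  "ptrace_A dA dB \<rho> = mat dB dB (\<lambda>(j,k). \<Sum>i<dA. \<rho> $$ (i*dB + j, i*dB + k))"

text \<open>Extension id_k \<otimes> E of a map E : n x n -> m x m to (k*n) x (k*n) matrices,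
  acting blockwise.\<close>
definition block :: "nat \<Rightarrow> nat \<Rightarrow> nat \<Rightarrow> complex mat \<Rightarrow> complex mat" where
  "block n i j X = mat n n (\<lambda>(a,b). X $$ (i*n + a, j*n + b))"

definition ampliate :: "nat \<Rightarrow> nat \<Rightarrow> nat \<Rightarrow> (complex mat \<Rightarrow> complex mat) \<Rightarrow> complex mat \<Rightarrow> complex mat" where
  "ampliate k n m E X = mat (k*m) (k*m) (\<lambda>(p,q). E (block n (p div m) (q div m) X) $$ (p mod m, q mod m))"

definition cptp :: "nat \<Rightarrow> nat \<Rightarrow> (complex mat \<Rightarrow> complex mat) \<Rightarrow> bool" where
  "cptp n m E \<longleftrightarrow>
     (\<forall>X \<in> carrier_mat n n. E X \<in> carrier_mat m m) \<and>
     (\<forall>X \<in> carrier_mat n n. \<forall>Y \<in> carrier_mat n n. E (X + Y) = E X + E Y) \<and>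
     (\<forall>X \<in> carrier_mat n n. \<forall>c. E (c \<cdot>\<^sub>m X) = c \<cdot>\<^sub>m E X) \<and>
     (\<forall>X \<in> carrier_mat n n. mtrace (E X) = mtrace X) \<and>
     (\<forall>k>0. \<forall>X. psd (k*n) X \<longrightarrow> psd (k*m) (ampliate k n m E X))"

definition prop_a :: "(complex mat \<Rightarrow> complex mat \<Rightarrow> ereal) \<Rightarrow> bool" where
  "prop_a D \<longleftrightarrow> (\<forall>n m E S T. cptp n m E \<longrightarrow> psd n S \<longrightarrow> psd n T \<longrightarrow> D (E S) (E T) \<le> D S T)"

definition prop_b :: "(complex mat \<Rightarrow> complex mat \<Rightarrow> ereal) \<Rightarrow> bool" where
  "prop_b D \<longleftrightarrow> (\<forall>n m S T T'. psd n S \<longrightarrow> psd n T \<longrightarrow> psd m T' \<longrightarrow>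
      D (four_block_mat S (0\<^sub>m n m) (0\<^sub>m m n) (0\<^sub>m m m))
        (four_block_mat T (0\<^sub>m n m) (0\<^sub>m m n) T') = D S T)"

definition H_K1 :: "(complex mat \<Rightarrow> complex mat \<Rightarrow> ereal) \<Rightarrow> nat \<Rightarrow> nat \<Rightarrow> complex mat \<Rightarrow> ereal" where
  "H_K1 D dA dB \<rho> = - D \<rho> (kron (1\<^sub>m dA) (ptrace_A dA dB \<rho>))"

definition H_K2 :: "(complex mat \<Rightarrow> complex mat \<Rightarrow> ereal) \<Rightarrow> nat \<Rightarrow> nat \<Rightarrow> complex mat \<Rightarrow> ereal" where
  "H_K2 D dA dB \<rho> = (SUP \<sigma> \<in> {\<sigma>. density dB \<sigma>}. - D \<rho> (kron (1\<^sub>m dA) \<sigma>))"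

end

theory Submission
  imports Defs
begin

lemma adj_dims[simp]: "dim_row (mat_adjoint A) = dim_col A" "dim_col (mat_adjoint (A::complex mat)) = dim_row A"
  unfolding mat_adjoint_def by (simp_all add: mat_of_rows_def)

lemma adj_index[simp]: "i < dim_col A \<Longrightarrow> j < dim_row A \<Longrightarrow> mat_adjoint (A::complex mat) $$ (i,j) = cnj (A $$ (j,i))"
  unfolding mat_adjoint_def by (simp add: mat_of_rows_def)

lemma adj_carrier[simp]: "(A::complex mat) \<in> carrier_mat n m \<Longrightarrow> mat_adjoint A \<in> carrier_mat m n"
  unfolding carrier_mat_def by simp

lemma adj_mult: assumes "(A::complex mat) \<in> carrier_mat n k" "B \<in> carrier_mat k m"
  shows "mat_adjoint (A*B) = mat_adjoint B * mat_adjoint A"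
  apply (rule eq_matI) using assms by (auto simp: scalar_prod_def sum_conjugate intro!: sum.cong)

lemma adj_adj[simp]: "mat_adjoint (mat_adjoint (A::complex mat)) = A"
  by (rule eq_matI) auto

lemma adj_one[simp]: "mat_adjoint (1\<^sub>m n :: complex mat) = 1\<^sub>m n"
  by (rule eq_matI) auto
lemma adj_zero[simp]: "mat_adjoint (0\<^sub>m n m :: complex mat) = 0\<^sub>m m n"
  by (rule eq_matI) auto
lemma adj_add: "(A::complex mat) \<in> carrier_mat n m \<Longrightarrow> B \<in> carrier_mat n m \<Longrightarrow> mat_adjoint (A+B) = mat_adjoint A + mat_adjoint B"
  by (rule eq_matI) auto
lemma adj_minus: "(A::complex mat) \<in> carrier_mat n m \<Longrightarrow> B \<in> carrier_mat n m \<Longrightarrow> mat_adjoint (A-B) = mat_adjoint A - mat_adjoint B"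
  by (rule eq_matI) auto
lemma adj_smult: "mat_adjoint (c \<cdot>\<^sub>m (A::complex mat)) = cnj c \<cdot>\<^sub>m mat_adjoint A"
  by (rule eq_matI) auto

lemma sum_mult_split: "(\<Sum>r<a*(b::nat). f r) = (\<Sum>x<a. \<Sum>y<b. f (x*b+y))"
proof -
  have "(\<Sum>x<a. \<Sum>y<b. f (x*b+y)) = (\<Sum>(x,y)\<in>{..<a}\<times>{..<b}. f (x*b+y))"
    by (simp add: sum.cartesian_product)
  also have "\<dots> = (\<Sum>r<a*b. f r)"
  proof (rule sum.reindex_bij_witness[of _ "\<lambda>r. (r div b, r mod b)" "\<lambda>(x,y). x*b+y"])
    fix r assume r: "r \<in> {..<a*b}"
    then have b: "b > 0" by (auto intro: ccontr)
    from r have "r div b < a" by (simp add: less_mult_imp_div_less)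
    with b show "(r div b, r mod b) \<in> {..<a}\<times>{..<b}" by simp
  next
    fix r assume r: "r \<in> {..<a*b}"
    show "(case (r div b, r mod b) of (x, y) \<Rightarrow> x * b + y) = r" by simp
  next
    fix p assume p: "p \<in> {..<a}\<times>{..<b}"
    then obtain x y where [simp]: "p = (x,y)" and xy: "x < a" "y < b" by auto
    show "(case p of (x, y) \<Rightarrow> x * b + y) \<in> {..<a * b}"
    proof -
      have "x*b+y < (x+1)*b" using xy by simp
      also have "\<dots> \<le> a*b" using xy by (intro mult_le_mono1) simp
      finally show ?thesis by simp
    qed
    show "((case p of (x, y) \<Rightarrow> x * b + y) div b, (case p of (x, y) \<Rightarrow> x * b + y) mod b) = p"
      using xy by simp
  qed (simp split: prod.splits)
  finally show ?thesis by simp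
qed

lemma divmod_small[simp]: "y < (b::nat) \<Longrightarrow> (x*b+y) div b = x" "y < (b::nat) \<Longrightarrow> (x*b+y) mod b = y"
  by auto

lemma kron_dims[simp]: "dim_row (kron A B) = dim_row A * dim_row B" "dim_col (kron A B) = dim_col A * dim_col B"
  unfolding kron_def by simp_all

lemma kron_carrier[simp]: "A \<in> carrier_mat a1 a2 \<Longrightarrow> B \<in> carrier_mat b1 b2 \<Longrightarrow> kron A B \<in> carrier_mat (a1*b1) (a2*b2)"
  unfolding carrier_mat_def by simp

lemma kron_index[simp]: "i < dim_row A * dim_row B \<Longrightarrow> j < dim_col A * dim_col B \<Longrightarrow>
   kron A B $$ (i,j) = A $$ (i div dim_row B, j div dim_col B) * B $$ (i mod dim_row B, j mod dim_col B)"
  unfolding kron_def by simp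

lemma kron_mult:
  assumes A: "A \<in> carrier_mat a1 a2" and B: "B \<in> carrier_mat b1 b2"
    and C: "C \<in> carrier_mat a2 a3" and D: "D \<in> carrier_mat b2 b3"
  shows "kron A B * kron C D = kron (A*C) (B*D)"
proof (rule eq_matI)
  fix i j assume i: "i < dim_row (kron (A*C) (B*D))" and j: "j < dim_col (kron (A*C) (B*D))"
  from i have i': "i < a1*b1" using A B by simp
  from j have j': "j < a3*b3" using C D by simp
  from i' have b1: "b1 > 0" by (auto intro: ccontr)
  from j' have b3: "b3 > 0" by (auto intro: ccontr)
  have idb: "i div b1 < a1" using i' by (simp add: less_mult_imp_div_less)
  have jdb: "j div b3 < a3" using j' by (simp add: less_mult_imp_div_less)
  have "(kron A B * kron C D) $$ (i,j) = (\<Sum>r<a2*b2. kron A B $$ (i,r) * kron C D $$ (r,j))"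
    using A B C D i' j' by (simp add: scalar_prod_def atLeast0LessThan)
  also have "\<dots> = (\<Sum>x<a2. \<Sum>y<b2. kron A B $$ (i,x*b2+y) * kron C D $$ (x*b2+y,j))"
    by (rule sum_mult_split)
  also have "\<dots> = (\<Sum>x<a2. \<Sum>y<b2. (A $$ (i div b1, x) * C $$ (x, j div b3)) * (B $$ (i mod b1, y) * D $$ (y, j mod b3)))"
  proof (intro sum.cong refl)
    fix x y assume x: "x \<in> {..<a2}" and y: "y \<in> {..<b2}"
    have "x*b2+y < a2*b2"
    proof -
      have "x*b2+y < (x+1)*b2" using y by simp
      also have "\<dots> \<le> a2*b2" using x by (intro mult_le_mono1) simp
      finally show ?thesis by simp
    qed
    then show "kron A B $$ (i,x*b2+y) * kron C D $$ (x*b2+y,j) = (A $$ (i div b1, x) * C $$ (x, j div b3)) * (B $$ (i mod b1, y) * D $$ (y, j mod b3))"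
      using A B C D i' j' y by simp
  qed
  also have "\<dots> = (\<Sum>x<a2. A $$ (i div b1, x) * C $$ (x, j div b3)) * (\<Sum>y<b2. B $$ (i mod b1, y) * D $$ (y, j mod b3))"
    by (simp add: sum_product)
  also have "\<dots> = kron (A*C) (B*D) $$ (i,j)"
    using A B C D i' j' idb jdb b1 b3 by (simp add: scalar_prod_def atLeast0LessThan)
  finally show "(kron A B * kron C D) $$ (i,j) = kron (A*C) (B*D) $$ (i,j)" .
qed (use A B C D in auto)

lemma kron_adj: "mat_adjoint (kron A B) = kron (mat_adjoint A) (mat_adjoint B)"
proof (rule eq_matI)
  fix i j assume i: "i < dim_row (kron (mat_adjoint A) (mat_adjoint B))" and j: "j < dim_col (kron (mat_adjoint A) (mat_adjoint B))"
  then have i': "i < dim_col A * dim_col B" and j': "j < dim_row A * dim_row B" by auto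
  from i' have b1: "dim_col B > 0" by (auto intro: ccontr)
  from j' have b3: "dim_row B > 0" by (auto intro: ccontr)
  have "i div dim_col B < dim_col A" using i' by (simp add: less_mult_imp_div_less)
  moreover have "j div dim_row B < dim_row A" using j' by (simp add: less_mult_imp_div_less)
  ultimately show "mat_adjoint (kron A B) $$ (i, j) = kron (mat_adjoint A) (mat_adjoint B) $$ (i, j)"
    using i' j' b1 b3 by simp
qed auto

lemma kron_one[simp]: "kron (1\<^sub>m a) (1\<^sub>m b) = (1\<^sub>m (a*b) :: complex mat)"
proof (rule eq_matI)
  fix i j assume "i < dim_row (1\<^sub>m (a*b) :: complex mat)" "j < dim_col (1\<^sub>m (a*b) :: complex mat)"
  then have i: "i < a*b" and j: "j < a*b" by auto
  then have b: "b > 0" by (auto intro: ccontr)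
  have "i div b < a" "j div b < a" using i j by (auto simp: less_mult_imp_div_less)
  moreover have "(i div b = j div b \<and> i mod b = j mod b) = (i = j)"
    by (metis div_mult_mod_eq)
  ultimately show "kron (1\<^sub>m a) (1\<^sub>m b) $$ (i, j) = (1\<^sub>m (a*b) :: complex mat) $$ (i, j)"
    using i j b by auto
qed auto

lemma kron_add_left: "A \<in> carrier_mat a1 a2 \<Longrightarrow> B \<in> carrier_mat a1 a2 \<Longrightarrow> kron (A+B) C = kron A C + kron B C"
  by (rule eq_matI) (auto simp: algebra_simps less_mult_imp_div_less)
lemma kron_minus_left: "A \<in> carrier_mat a1 a2 \<Longrightarrow> B \<in> carrier_mat a1 a2 \<Longrightarrow> kron (A-B) C = kron A C - kron B C"
  by (rule eq_matI) (auto simp: algebra_simps less_mult_imp_div_less)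
lemma kron_add_right: "B \<in> carrier_mat b1 b2 \<Longrightarrow> C \<in> carrier_mat b1 b2 \<Longrightarrow> kron A (B+C) = kron A B + kron A C"
proof (rule eq_matI)
  fix i j assume a: "B \<in> carrier_mat b1 b2" "C \<in> carrier_mat b1 b2" and "i < dim_row (kron A B + kron A C)" "j < dim_col (kron A B + kron A C)"
  then have i: "i < dim_row A * b1" and j: "j < dim_col A * b2" by auto
  then have "b1 > 0" "b2 > 0" by (auto intro: ccontr)
  then show "kron A (B + C) $$ (i, j) = (kron A B + kron A C) $$ (i, j)"
    using a i j by (simp add: algebra_simps)
qed auto

lemma mtrace_mult_comm: assumes "A \<in> carrier_mat n m" "B \<in> carrier_mat m n"
  shows "mtrace (A*B) = mtrace (B*A)"
proof -
  have "mtrace (A*B) = (\<Sum>i<n. \<Sum>k<m. A$$(i,k) * B$$(k,i))"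
    using assms unfolding mtrace_def by (simp add: scalar_prod_def atLeast0LessThan)
  also have "\<dots> = (\<Sum>k<m. \<Sum>i<n. B$$(k,i) * A$$(i,k))"
    by (subst sum.swap) (simp add: mult.commute)
  also have "\<dots> = mtrace (B*A)"
    using assms unfolding mtrace_def by (simp add: scalar_prod_def atLeast0LessThan)
  finally show ?thesis .
qed

lemma mtrace_add: "A \<in> carrier_mat n n \<Longrightarrow> B \<in> carrier_mat n n \<Longrightarrow> mtrace (A+B) = mtrace A + mtrace B"
  unfolding mtrace_def by (simp add: sum.distrib)
lemma mtrace_smult: assumes "A \<in> carrier_mat n n" shows "mtrace (c \<cdot>\<^sub>m A) = c * mtrace A"
proof -
  have "\<And>i. i < n \<Longrightarrow> (c \<cdot>\<^sub>m A) $$ (i,i) = c * A $$ (i,i)" using assms by auto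
  then show ?thesis using assms unfolding mtrace_def by (simp add: sum_distrib_left)
qed
lemma mtrace_one[simp]: "mtrace (1\<^sub>m n) = of_nat n"
  unfolding mtrace_def by simp

lemma qf_sum: assumes "(A::complex mat) \<in> carrier_mat n n" "v \<in> carrier_vec n"
  shows "conjugate v \<bullet> (A *\<^sub>v v) = (\<Sum>i<n. \<Sum>j<n. cnj (v$i) * A$$(i,j) * v$j)"
proof -
  have "conjugate v \<bullet> (A *\<^sub>v v) = (\<Sum>i<n. cnj (v$i) * (\<Sum>j<n. A$$(i,j) * v$j))"
    using assms by (auto simp: scalar_prod_def atLeast0LessThan intro!: sum.cong)
  also have "\<dots> = (\<Sum>i<n. \<Sum>j<n. cnj (v$i) * A$$(i,j) * v$j)"
    by (simp add: sum_distrib_left mult.assoc)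
  finally show ?thesis .
qed

lemma adj_vec: assumes "(K::complex mat) \<in> carrier_mat m n" "v \<in> carrier_vec m" "w \<in> carrier_vec n"
  shows "conjugate v \<bullet> (K *\<^sub>v w) = conjugate (mat_adjoint K *\<^sub>v v) \<bullet> w"
proof -
  have "conjugate v \<bullet> (K *\<^sub>v w) = (\<Sum>i<m. cnj (v$i) * (\<Sum>j<n. K$$(i,j) * w$j))"
    using assms by (auto simp: scalar_prod_def atLeast0LessThan intro!: sum.cong)
  also have "\<dots> = (\<Sum>i<m. \<Sum>j<n. cnj (v$i) * K$$(i,j) * w$j)"
    by (simp add: sum_distrib_left mult.assoc)
  also have "\<dots> = (\<Sum>j<n. \<Sum>i<m. cnj (v$i) * K$$(i,j) * w$j)"
    by (rule sum.swap)
  also have "\<dots> = (\<Sum>j<n. cnj (\<Sum>i<m. cnj (K$$(i,j)) * v$i) * w$j)"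
    by (simp add: sum_conjugate sum_distrib_left sum_distrib_right mult_ac)
  also have "\<dots> = conjugate (mat_adjoint K *\<^sub>v v) \<bullet> w"
    using assms by (auto simp: scalar_prod_def atLeast0LessThan intro!: sum.cong)
  finally show ?thesis .
qed

lemma psd_carrier: "psd n A \<Longrightarrow> A \<in> carrier_mat n n"
  unfolding psd_def by simp

lemma psd_congr: assumes "psd n A" "(K::complex mat) \<in> carrier_mat m n"
  shows "psd m (K * A * mat_adjoint K)"
  unfolding psd_def
proof (intro conjI ballI)
  have A: "A \<in> carrier_mat n n" using assms(1) by (rule psd_carrier)
  have K: "K \<in> carrier_mat m n" by (rule assms(2))
  have K': "mat_adjoint K \<in> carrier_mat n m" using K by (rule adj_carrier)
  have KA: "K * A \<in> carrier_mat m n" using K A by (rule mult_carrier_mat)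
  show "K * A * mat_adjoint K \<in> carrier_mat m m" using KA K' by (rule mult_carrier_mat)
  fix v :: "complex vec" assume v: "v \<in> carrier_vec m"
  define u where "u = mat_adjoint K *\<^sub>v v"
  have u: "u \<in> carrier_vec n" unfolding u_def using K' v by (rule mult_mat_vec_carrier)
  have Au: "A *\<^sub>v u \<in> carrier_vec n" using A u by (rule mult_mat_vec_carrier)
  have "(K * A * mat_adjoint K) *\<^sub>v v = (K * A) *\<^sub>v u"
    unfolding u_def by (rule assoc_mult_mat_vec[OF KA K' v])
  also have "\<dots> = K *\<^sub>v (A *\<^sub>v u)" by (rule assoc_mult_mat_vec[OF K A u])
  finally have "conjugate v \<bullet> ((K * A * mat_adjoint K) *\<^sub>v v) = conjugate v \<bullet> (K *\<^sub>v (A *\<^sub>v u))" by simp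
  also have "\<dots> = conjugate u \<bullet> (A *\<^sub>v u)" unfolding u_def by (rule adj_vec[OF K v Au[unfolded u_def]])
  finally have eq: "conjugate v \<bullet> ((K * A * mat_adjoint K) *\<^sub>v v) = conjugate u \<bullet> (A *\<^sub>v u)" .
  have "conjugate u \<bullet> (A *\<^sub>v u) \<in> \<real> \<and> 0 \<le> Re (conjugate u \<bullet> (A *\<^sub>v u))"
    using assms(1) u unfolding psd_def by blast
  then show "conjugate v \<bullet> ((K * A * mat_adjoint K) *\<^sub>v v) \<in> \<real>"
       "0 \<le> Re (conjugate v \<bullet> ((K * A * mat_adjoint K) *\<^sub>v v))"
    unfolding eq by auto
qed

lemma psd_add: assumes "psd n A" "psd n B" shows "psd n (A + B)"
  unfolding psd_def
proof (intro conjI ballI)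
  have A: "A \<in> carrier_mat n n" and B: "B \<in> carrier_mat n n" using assms by (auto dest: psd_carrier)
  then show "A + B \<in> carrier_mat n n" by simp
  fix v :: "complex vec" assume v: "v \<in> carrier_vec n"
  have "conjugate v \<bullet> ((A + B) *\<^sub>v v) = conjugate v \<bullet> (A *\<^sub>v v + B *\<^sub>v v)"
    by (simp only: add_mult_distrib_mat_vec[OF A B v])
  also have "\<dots> = conjugate v \<bullet> (A *\<^sub>v v) + conjugate v \<bullet> (B *\<^sub>v v)"
    by (rule scalar_prod_add_distrib[of _ n]) (use A B v in auto)
  finally have eq: "conjugate v \<bullet> ((A + B) *\<^sub>v v) = conjugate v \<bullet> (A *\<^sub>v v) + conjugate v \<bullet> (B *\<^sub>v v)" .
  have "conjugate v \<bullet> (A *\<^sub>v v) \<in> \<real> \<and> 0 \<le> Re (conjugate v \<bullet> (A *\<^sub>v v))"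
       "conjugate v \<bullet> (B *\<^sub>v v) \<in> \<real> \<and> 0 \<le> Re (conjugate v \<bullet> (B *\<^sub>v v))"
    using assms v unfolding psd_def by blast+
  then show "conjugate v \<bullet> ((A + B) *\<^sub>v v) \<in> \<real>" "0 \<le> Re (conjugate v \<bullet> ((A + B) *\<^sub>v v))"
    unfolding eq by auto
qed

lemma psd_smult: assumes "psd n A" "c \<in> \<real>" "Re c \<ge> 0" shows "psd n (c \<cdot>\<^sub>m A)"
  unfolding psd_def
proof (intro conjI ballI)
  have A: "A \<in> carrier_mat n n" using assms by (auto dest: psd_carrier)
  then show cA: "c \<cdot>\<^sub>m A \<in> carrier_mat n n" by simp
  fix v :: "complex vec" assume v: "v \<in> carrier_vec n"
  have "conjugate v \<bullet> ((c \<cdot>\<^sub>m A) *\<^sub>v v) = (\<Sum>i<n. \<Sum>j<n. cnj (v$i) * (c \<cdot>\<^sub>m A)$$(i,j) * v$j)"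
    by (rule qf_sum[OF cA v])
  also have "\<dots> = (\<Sum>i<n. \<Sum>j<n. c * (cnj (v$i) * A$$(i,j) * v$j))"
    using A by (auto intro!: sum.cong)
  also have "\<dots> = c * (conjugate v \<bullet> (A *\<^sub>v v))"
    unfolding qf_sum[OF A v] by (simp add: sum_distrib_left)
  finally have eq: "conjugate v \<bullet> ((c \<cdot>\<^sub>m A) *\<^sub>v v) = c * (conjugate v \<bullet> (A *\<^sub>v v))" .
  have r: "conjugate v \<bullet> (A *\<^sub>v v) \<in> \<real>" "0 \<le> Re (conjugate v \<bullet> (A *\<^sub>v v))" using assms(1) v unfolding psd_def by auto
  from assms(2) obtain a where a: "c = of_real a" by (auto elim: Reals_cases)
  from r(1) obtain b where b: "conjugate v \<bullet> (A *\<^sub>v v) = of_real b" by (auto elim: Reals_cases)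
  show "conjugate v \<bullet> ((c \<cdot>\<^sub>m A) *\<^sub>v v) \<in> \<real>" "0 \<le> Re (conjugate v \<bullet> ((c \<cdot>\<^sub>m A) *\<^sub>v v))"
    unfolding eq using a b assms(3) r(2) by auto
qed

lemma cnj_mult_self: "cnj z * z = complex_of_real ((Re z)^2 + (Im z)^2)"
  by (simp add: complex_eq_iff power2_eq_square)

lemma sum_if_delta2: "(k::nat) < n \<Longrightarrow> (\<Sum>i<n. \<Sum>j<n. if i = k \<and> j = k then f i j else 0) = f k k"
proof -
  assume k: "k < n"
  have "(\<Sum>i<n. \<Sum>j<n. if i = k \<and> j = k then f i j else 0) = (\<Sum>i<n. if i = k then f k k else 0)"
  proof (rule sum.cong[OF refl])
    fix i assume "i \<in> {..<n}"
    show "(\<Sum>j<n. if i = k \<and> j = k then f i j else 0) = (if i = k then f k k else 0)"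
      using k by (cases "i = k") auto
  qed
  also have "\<dots> = f k k" using k by simp
  finally show ?thesis .
qed

lemma psd_one: "psd n (1\<^sub>m n)"
  unfolding psd_def
proof (intro conjI ballI)
  show I: "1\<^sub>m n \<in> carrier_mat n n" by simp
  fix v :: "complex vec" assume v: "v \<in> carrier_vec n"
  have "conjugate v \<bullet> (1\<^sub>m n *\<^sub>v v) = (\<Sum>i<n. \<Sum>j<n. cnj (v$i) * (1\<^sub>m n :: complex mat)$$(i,j) * v$j)"
    by (rule qf_sum[OF I v])
  also have "\<dots> = (\<Sum>i<n. \<Sum>j<n. if i = j then cnj (v$i) * v$j else 0)"
    by (intro sum.cong refl) auto
  also have "\<dots> = (\<Sum>i<n. of_real ((Re (v$i))^2 + (Im (v$i))^2))"
    by (rule sum.cong[OF refl]) (simp add: cnj_mult_self)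
  finally have eq: "conjugate v \<bullet> (1\<^sub>m n *\<^sub>v v) = (\<Sum>i<n. of_real ((Re (v$i))^2 + (Im (v$i))^2))" .
  show "conjugate v \<bullet> (1\<^sub>m n *\<^sub>v v) \<in> \<real>" "0 \<le> Re (conjugate v \<bullet> (1\<^sub>m n *\<^sub>v v))"
    unfolding eq by (auto simp: sum_nonneg Re_sum)
qed

lemma psd_zero: "psd n (0\<^sub>m n n)"
  unfolding psd_def
proof (intro conjI ballI)
  show Z: "0\<^sub>m n n \<in> carrier_mat n n" by simp
  fix v :: "complex vec" assume v: "v \<in> carrier_vec n"
  have "conjugate v \<bullet> (0\<^sub>m n n *\<^sub>v v) = (\<Sum>i<n. \<Sum>j<n. cnj (v$i) * (0\<^sub>m n n :: complex mat)$$(i,j) * v$j)"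
    by (rule qf_sum[OF Z v])
  also have "\<dots> = 0" by (auto intro!: sum.neutral)
  finally show "conjugate v \<bullet> (0\<^sub>m n n *\<^sub>v v) \<in> \<real>" "0 \<le> Re (conjugate v \<bullet> (0\<^sub>m n n *\<^sub>v v))" by auto
qed

lemma psd_trace: assumes "psd n A" shows "mtrace A \<in> \<real>" "Re (mtrace A) \<ge> 0"
proof -
  have A: "A \<in> carrier_mat n n" using assms by (rule psd_carrier)
  have e: "conjugate (unit_vec n k) \<bullet> (A *\<^sub>v unit_vec n k) = A $$ (k,k)" if k: "k < n" for k
  proof -
    have "conjugate (unit_vec n k) \<bullet> (A *\<^sub>v unit_vec n k) = (\<Sum>i<n. \<Sum>j<n. cnj (unit_vec n k $ i) * A$$(i,j) * unit_vec n k $ j)"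
      by (rule qf_sum[OF A unit_vec_carrier])
    also have "\<dots> = (\<Sum>i<n. \<Sum>j<n. if i = k \<and> j = k then A$$(i,j) else 0)"
      by (intro sum.cong refl) (auto simp: unit_vec_def)
    also have "\<dots> = A $$ (k,k)" using k by (rule sum_if_delta2)
    finally show ?thesis .
  qed
  have "mtrace A = (\<Sum>i<n. A $$ (i,i))"
    using A unfolding mtrace_def by simp
  also have "\<dots> = (\<Sum>i<n. conjugate (unit_vec n i) \<bullet> (A *\<^sub>v unit_vec n i))"
    by (rule sum.cong[OF refl], rule e[symmetric]) simp
  finally have "mtrace A = (\<Sum>i<n. conjugate (unit_vec n i) \<bullet> (A *\<^sub>v unit_vec n i))" .
  moreover have "\<And>i. conjugate (unit_vec n i) \<bullet> (A *\<^sub>v unit_vec n i) \<in> \<real> \<and> 0 \<le> Re (conjugate (unit_vec n i) \<bullet> (A *\<^sub>v unit_vec n i))"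
    using assms unfolding psd_def by simp
  ultimately show "mtrace A \<in> \<real>" "Re (mtrace A) \<ge> 0"
    by (auto intro: sum_nonneg sum_in_Reals simp: Re_sum)
qed



lemma mult3_index: assumes "A \<in> carrier_mat a b" "B \<in> carrier_mat b c" "C \<in> carrier_mat c d" "i < a" "j < d"
  shows "(A*B*C) $$ (i,j) = (\<Sum>s<c. (\<Sum>r<b. A$$(i,r)*B$$(r,s)) * C$$(s,j))"
proof -
  have "(A*B*C) $$ (i,j) = (\<Sum>s<c. (A*B)$$(i,s) * C$$(s,j))"
    using assms by (simp del: assoc_mult_mat add: scalar_prod_def atLeast0LessThan)
  also have "\<dots> = (\<Sum>s<c. (\<Sum>r<b. A$$(i,r)*B$$(r,s)) * C$$(s,j))"
    using assms by (intro sum.cong refl) (simp add: scalar_prod_def atLeast0LessThan)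
  finally show ?thesis .
qed

lemma block_carrier[simp]: "block n i j X \<in> carrier_mat n n"
  unfolding block_def by simp
lemma block_index[simp]: "a < n \<Longrightarrow> b < n \<Longrightarrow> block n i j X $$ (a,b) = X $$ (i*n+a, j*n+b)"
  unfolding block_def by simp
lemma ampliate_carrier[simp]: "ampliate k n m E X \<in> carrier_mat (k*m) (k*m)"
  unfolding ampliate_def by simp
lemma ampliate_dims[simp]: "dim_row (ampliate k n m E X) = k*m" "dim_col (ampliate k n m E X) = k*m"
  unfolding ampliate_def by simp_all
lemma ampliate_index: "p < k*m \<Longrightarrow> q < k*m \<Longrightarrow> ampliate k n m E X $$ (p,q) = E (block n (p div m) (q div m) X) $$ (p mod m, q mod m)"
  unfolding ampliate_def by simp

lemma ampliate_add: assumes "\<And>Y. Y \<in> carrier_mat n n \<Longrightarrow> E1 Y \<in> carrier_mat m m"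
  "\<And>Y. Y \<in> carrier_mat n n \<Longrightarrow> E2 Y \<in> carrier_mat m m"
  shows "ampliate k n m (\<lambda>Y. E1 Y + E2 Y) X = ampliate k n m E1 X + ampliate k n m E2 X"
proof (rule eq_matI)
  fix p q assume "p < dim_row (ampliate k n m E1 X + ampliate k n m E2 X)" "q < dim_col (ampliate k n m E1 X + ampliate k n m E2 X)"
  then have p: "p < k*m" and q: "q < k*m" by auto
  then have "m > 0" by (auto intro: ccontr)
  then have "p mod m < m" "q mod m < m" by auto
  moreover have "E1 (block n (p div m) (q div m) X) \<in> carrier_mat m m" "E2 (block n (p div m) (q div m) X) \<in> carrier_mat m m"
    using assms by auto
  ultimately show "ampliate k n m (\<lambda>Y. E1 Y + E2 Y) X $$ (p, q) = (ampliate k n m E1 X + ampliate k n m E2 X) $$ (p, q)"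
    using p q by (simp add: ampliate_index)
qed auto

lemma sum_collapse: assumes "i < k"
  shows "(\<Sum>r<k*(n::nat). if r div n = i then h r else 0) = (\<Sum>a<n. h (i*n+a))"
proof -
  have "(\<Sum>r<k*n. if r div n = i then h r else 0) = (\<Sum>x<k. \<Sum>y<n. if (x*n+y) div n = i then h (x*n+y) else 0)"
    by (rule sum_mult_split)
  also have "\<dots> = (\<Sum>x<k. if x = i then (\<Sum>y<n. h (x*n+y)) else 0)"
    by (intro sum.cong refl) auto
  also have "\<dots> = (\<Sum>a<n. h (i*n+a))" using assms by simp
  finally show ?thesis .
qed

lemma ampliate_congr: assumes K: "(K::complex mat) \<in> carrier_mat m n" and X: "X \<in> carrier_mat (k*n) (k*n)"
  shows "ampliate k n m (\<lambda>Y. K * Y * mat_adjoint K) X = kron (1\<^sub>m k) K * X * mat_adjoint (kron (1\<^sub>m k) K)"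
proof (rule eq_matI)
  have KK: "kron (1\<^sub>m k) K \<in> carrier_mat (k*m) (k*n)" using K by simp
  have KK': "mat_adjoint (kron (1\<^sub>m k) K) \<in> carrier_mat (k*n) (k*m)" using KK by (rule adj_carrier)
  fix p q assume "p < dim_row (kron (1\<^sub>m k) K * X * mat_adjoint (kron (1\<^sub>m k) K))"
    "q < dim_col (kron (1\<^sub>m k) K * X * mat_adjoint (kron (1\<^sub>m k) K))"
  then have p: "p < k*m" and q: "q < k*m" using K by auto
  then have m: "m > 0" by (auto intro: ccontr)
  have pd: "p div m < k" and qd: "q div m < k" using p q by (auto simp: less_mult_imp_div_less)
  have pm: "p mod m < m" and qm: "q mod m < m" using m by auto
  have KK_idx: "kron (1\<^sub>m k) K $$ (t, r) = (if r div n = t div m then K $$ (t mod m, r mod n) else 0)"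
    if "t < k*m" "r < k*n" for t r
  proof -
    have "n > 0" using that by (auto intro: ccontr)
    then have "r div n < k" "t div m < k" using that by (auto simp: less_mult_imp_div_less)
    then show ?thesis using that K by auto
  qed
  have "ampliate k n m (\<lambda>Y. K * Y * mat_adjoint K) X $$ (p,q)
     = (K * block n (p div m) (q div m) X * mat_adjoint K) $$ (p mod m, q mod m)"
    using p q by (simp add: ampliate_index)
  also have "\<dots> = (\<Sum>b<n. (\<Sum>a<n. K$$(p mod m,a) * X$$((p div m)*n+a, (q div m)*n+b)) * cnj (K$$(q mod m, b)))"
    by (subst mult3_index[OF K block_carrier adj_carrier[OF K] pm qm]) (use K qm in \<open>auto intro!: sum.cong\<close>)
  also have "\<dots> = (\<Sum>s<k*n. (\<Sum>r<k*n. kron (1\<^sub>m k) K $$ (p,r) * X$$(r,s)) * mat_adjoint (kron (1\<^sub>m k) K) $$ (s,q))"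
  proof -
    have inner: "(\<Sum>r<k*n. kron (1\<^sub>m k) K $$ (p,r) * X$$(r,s)) = (\<Sum>a<n. K$$(p mod m,a) * X$$((p div m)*n+a, s))" for s
    proof -
      have "(\<Sum>r<k*n. kron (1\<^sub>m k) K $$ (p,r) * X$$(r,s)) = (\<Sum>r<k*n. if r div n = p div m then K $$ (p mod m, r mod n) * X$$(r,s) else 0)"
        by (intro sum.cong refl) (use p KK_idx in auto)
      also have "\<dots> = (\<Sum>a<n. K$$(p mod m,a) * X$$((p div m)*n+a, s))"
        by (subst sum_collapse[OF pd]) (intro sum.cong refl, auto)
      finally show ?thesis .
    qed
    have "(\<Sum>s<k*n. (\<Sum>r<k*n. kron (1\<^sub>m k) K $$ (p,r) * X$$(r,s)) * mat_adjoint (kron (1\<^sub>m k) K) $$ (s,q))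
       = (\<Sum>s<k*n. if s div n = q div m then (\<Sum>a<n. K$$(p mod m,a) * X$$((p div m)*n+a, s)) * cnj (K $$ (q mod m, s mod n)) else 0)"
      by (intro sum.cong refl) (use q KK_idx inner K in auto)
    also have "\<dots> = (\<Sum>b<n. (\<Sum>a<n. K$$(p mod m,a) * X$$((p div m)*n+a, (q div m)*n+b)) * cnj (K$$(q mod m, b)))"
      by (subst sum_collapse[OF qd]) (intro sum.cong refl, auto)
    finally show ?thesis by simp
  qed
  also have "\<dots> = (kron (1\<^sub>m k) K * X * mat_adjoint (kron (1\<^sub>m k) K)) $$ (p,q)"
    by (rule mult3_index[OF KK X KK' p q, symmetric])
  finally show "ampliate k n m (\<lambda>Y. K * Y * mat_adjoint K) X $$ (p,q) = (kron (1\<^sub>m k) K * X * mat_adjoint (kron (1\<^sub>m k) K)) $$ (p,q)" .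
qed (use K in auto)


lemma congr_carrier: "(K::complex mat) \<in> carrier_mat m n \<Longrightarrow> X \<in> carrier_mat n n \<Longrightarrow> K * X * mat_adjoint K \<in> carrier_mat m m"
  by (meson adj_carrier mult_carrier_mat)

lemma congr_add: assumes K: "(K::complex mat) \<in> carrier_mat m n" and X: "X \<in> carrier_mat n n" and Y: "Y \<in> carrier_mat n n"
  shows "K * (X + Y) * mat_adjoint K = K * X * mat_adjoint K + K * Y * mat_adjoint K"
proof -
  have K': "mat_adjoint K \<in> carrier_mat n m" using K by simp
  have "K * (X + Y) = K * X + K * Y" by (rule mult_add_distrib_mat[OF K X Y])
  then have "K * (X + Y) * mat_adjoint K = (K * X + K * Y) * mat_adjoint K" by simp
  also have "\<dots> = K * X * mat_adjoint K + K * Y * mat_adjoint K"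
    by (rule add_mult_distrib_mat[OF _ _ K']) (use K X Y in auto)
  finally show ?thesis .
qed

lemma congr_smult: assumes K: "(K::complex mat) \<in> carrier_mat m n" and X: "X \<in> carrier_mat n n"
  shows "K * (c \<cdot>\<^sub>m X) * mat_adjoint K = c \<cdot>\<^sub>m (K * X * mat_adjoint K)"
proof -
  have K': "mat_adjoint K \<in> carrier_mat n m" using K by simp
  have "K * (c \<cdot>\<^sub>m X) = c \<cdot>\<^sub>m (K * X)" by (rule mult_smult_distrib[OF K X])
  then have "K * (c \<cdot>\<^sub>m X) * mat_adjoint K = (c \<cdot>\<^sub>m (K * X)) * mat_adjoint K" by simp
  also have "\<dots> = c \<cdot>\<^sub>m (K * X * mat_adjoint K)"
    by (rule mult_smult_assoc_mat[OF _ K']) (use K X in auto)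
  finally show ?thesis .
qed

lemma congr_trace: assumes K: "(K::complex mat) \<in> carrier_mat m n" and X: "X \<in> carrier_mat n n"
  shows "mtrace (K * X * mat_adjoint K) = mtrace (mat_adjoint K * K * X)"
proof -
  have K': "mat_adjoint K \<in> carrier_mat n m" using K by simp
  have "mtrace (K * X * mat_adjoint K) = mtrace (mat_adjoint K * (K * X))"
    by (rule mtrace_mult_comm[of _ m n]) (use K X K' in auto)
  also have "mat_adjoint K * (K * X) = mat_adjoint K * K * X"
    by (rule assoc_mult_mat[OF K' K X, symmetric])
  finally show ?thesis .
qed

lemma kraus2_cptp:
  assumes K1: "(K1::complex mat) \<in> carrier_mat m n" and K2: "K2 \<in> carrier_mat m n"
    and id: "mat_adjoint K1 * K1 + mat_adjoint K2 * K2 = 1\<^sub>m n"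
  shows "cptp n m (\<lambda>X. K1 * X * mat_adjoint K1 + K2 * X * mat_adjoint K2)"
  unfolding cptp_def
proof (intro conjI ballI allI impI)
  fix X :: "complex mat" assume X: "X \<in> carrier_mat n n"
  show "K1 * X * mat_adjoint K1 + K2 * X * mat_adjoint K2 \<in> carrier_mat m m"
    using congr_carrier[OF K1 X] congr_carrier[OF K2 X] by simp
  {
    fix Y :: "complex mat" assume Y: "Y \<in> carrier_mat n n"
    show "K1 * (X + Y) * mat_adjoint K1 + K2 * (X + Y) * mat_adjoint K2 =
      K1 * X * mat_adjoint K1 + K2 * X * mat_adjoint K2 + (K1 * Y * mat_adjoint K1 + K2 * Y * mat_adjoint K2)"
      unfolding congr_add[OF K1 X Y] congr_add[OF K2 X Y]
      using congr_carrier[OF K1 X] congr_carrier[OF K2 X] congr_carrier[OF K1 Y] congr_carrier[OF K2 Y]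
      by (intro eq_matI) auto
  }
  fix c
  show "K1 * (c \<cdot>\<^sub>m X) * mat_adjoint K1 + K2 * (c \<cdot>\<^sub>m X) * mat_adjoint K2 =
    c \<cdot>\<^sub>m (K1 * X * mat_adjoint K1 + K2 * X * mat_adjoint K2)"
    unfolding congr_smult[OF K1 X] congr_smult[OF K2 X]
    using congr_carrier[OF K1 X] congr_carrier[OF K2 X] K1 K2
    by (intro eq_matI) (auto simp: algebra_simps)
next
  fix X :: "complex mat" assume X: "X \<in> carrier_mat n n"
  have A1: "mat_adjoint K1 * K1 \<in> carrier_mat n n" and A2: "mat_adjoint K2 * K2 \<in> carrier_mat n n"
    using K1 K2 by (meson adj_carrier mult_carrier_mat)+
  have "mtrace (K1 * X * mat_adjoint K1 + K2 * X * mat_adjoint K2) = mtrace (K1 * X * mat_adjoint K1) + mtrace (K2 * X * mat_adjoint K2)"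
    by (rule mtrace_add) (use congr_carrier[OF K1 X] congr_carrier[OF K2 X] in auto)
  also have "\<dots> = mtrace (mat_adjoint K1 * K1 * X) + mtrace (mat_adjoint K2 * K2 * X)"
    by (simp add: congr_trace[OF K1 X] congr_trace[OF K2 X])
  also have "\<dots> = mtrace (mat_adjoint K1 * K1 * X + mat_adjoint K2 * K2 * X)"
    by (rule mtrace_add[symmetric, of _ n]) (use A1 A2 X in auto)
  also have "mat_adjoint K1 * K1 * X + mat_adjoint K2 * K2 * X = (mat_adjoint K1 * K1 + mat_adjoint K2 * K2) * X"
    by (rule add_mult_distrib_mat[OF A1 A2 X, symmetric])
  also have "\<dots> = X" using id X by simp
  finally show "mtrace (K1 * X * mat_adjoint K1 + K2 * X * mat_adjoint K2) = mtrace X" .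
next
  fix k and X :: "complex mat" assume k: "0 < k" and X: "psd (k * n) X"
  have Xc: "X \<in> carrier_mat (k*n) (k*n)" using X by (rule psd_carrier)
  have "ampliate k n m (\<lambda>X. K1 * X * mat_adjoint K1 + K2 * X * mat_adjoint K2) X
     = ampliate k n m (\<lambda>X. K1 * X * mat_adjoint K1) X + ampliate k n m (\<lambda>X. K2 * X * mat_adjoint K2) X"
    by (rule ampliate_add) (use congr_carrier K1 K2 in auto)
  also have "\<dots> = kron (1\<^sub>m k) K1 * X * mat_adjoint (kron (1\<^sub>m k) K1) + kron (1\<^sub>m k) K2 * X * mat_adjoint (kron (1\<^sub>m k) K2)"
    by (simp add: ampliate_congr[OF K1 Xc] ampliate_congr[OF K2 Xc])
  finally have eq: "ampliate k n m (\<lambda>X. K1 * X * mat_adjoint K1 + K2 * X * mat_adjoint K2) X = kron (1\<^sub>m k) K1 * X * mat_adjoint (kron (1\<^sub>m k) K1) + kron (1\<^sub>m k) K2 * X * mat_adjoint (kron (1\<^sub>m k) K2)" .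
  have c1: "kron (1\<^sub>m k) K1 \<in> carrier_mat (k*m) (k*n)" using K1 by simp
  have c2: "kron (1\<^sub>m k) K2 \<in> carrier_mat (k*m) (k*n)" using K2 by simp
  show "psd (k * m) (ampliate k n m (\<lambda>X. K1 * X * mat_adjoint K1 + K2 * X * mat_adjoint K2) X)"
    unfolding eq by (rule psd_add[OF psd_congr[OF X c1] psd_congr[OF X c2]])
qed



definition J1 :: "nat \<Rightarrow> nat \<Rightarrow> complex mat" where
  "J1 n N = mat (n+N) n (\<lambda>(i,j). if i = j then 1 else 0)"
definition J2 :: "nat \<Rightarrow> nat \<Rightarrow> complex mat" where
  "J2 n N = mat (n+N) N (\<lambda>(i,j). if i = j + n then 1 else 0)"

lemma J1_carrier[simp]: "J1 n N \<in> carrier_mat (n+N) n" unfolding J1_def by simp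
lemma J2_carrier[simp]: "J2 n N \<in> carrier_mat (n+N) N" unfolding J2_def by simp
lemma J_dims[simp]: "dim_row (J1 n N) = n+N" "dim_col (J1 n N) = n" "dim_row (J2 n N) = n+N" "dim_col (J2 n N) = N"
  unfolding J1_def J2_def by simp_all
lemma J1_index[simp]: "i < n+N \<Longrightarrow> j < n \<Longrightarrow> J1 n N $$ (i,j) = (if i = j then 1 else 0)" unfolding J1_def by simp
lemma J2_index[simp]: "i < n+N \<Longrightarrow> j < N \<Longrightarrow> J2 n N $$ (i,j) = (if i = j + n then 1 else 0)" unfolding J2_def by simp

lemma if01_mult[simp]: "(if P then 1 else 0) * (x::complex) = (if P then x else 0)"
  "x * (if P then 1 else 0) = (if P then x else 0)" "cnj (if P then 1 else 0) = (if P then 1 else 0)"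
  by auto

lemma sum_delta_shift: "(\<Sum>r<N. if i = r + (n::nat) then f r else 0) = (if n \<le> i \<and> i - n < N then f (i-n) else 0)"
proof -
  have "(\<Sum>r<N. if i = r + n then f r else 0) = (\<Sum>r<N. if r = i - n \<and> n \<le> i then f r else 0)"
    by (intro sum.cong refl) auto
  also have "\<dots> = (if n \<le> i \<and> i - n < N then f (i-n) else 0)"
    by (cases "n \<le> i") (simp_all add: sum.delta)
  finally show ?thesis .
qed

lemma sum_delta_shift': "(\<Sum>r<N. if r + (n::nat) = i then f r else 0) = (if n \<le> i \<and> i - n < N then f (i-n) else 0)"
proof -
  have "(\<Sum>r<N. if r + n = i then f r else 0) = (\<Sum>r<N. if i = r + n then f r else 0)"
    by (intro sum.cong refl) auto
  then show ?thesis by (simp add: sum_delta_shift)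
qed

lemma B1: assumes A: "A \<in> carrier_mat n n" and B: "B \<in> carrier_mat n N" and C: "C \<in> carrier_mat N n" and D: "D \<in> carrier_mat N N"
  shows "mat_adjoint (J1 n N) * four_block_mat A B C D * J1 n N = A"
proof (rule eq_matI)
  have F: "four_block_mat A B C D \<in> carrier_mat (n+N) (n+N)" using A D by simp
  fix i j assume "i < dim_row A" "j < dim_col A"
  then have i: "i < n" and j: "j < n" using A by auto
  have "(mat_adjoint (J1 n N) * four_block_mat A B C D * J1 n N) $$ (i,j)
    = (\<Sum>s<n+N. (\<Sum>r<n+N. mat_adjoint (J1 n N) $$ (i,r) * four_block_mat A B C D $$ (r,s)) * J1 n N $$ (s,j))"
    by (rule mult3_index[OF adj_carrier[OF J1_carrier] F J1_carrier i j])
  also have "\<dots> = (\<Sum>s<n+N. four_block_mat A B C D $$ (i,s) * J1 n N $$ (s,j))"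
  proof (rule sum.cong[OF refl])
    fix s assume s: "s \<in> {..<n+N}"
    have "(\<Sum>r<n+N. mat_adjoint (J1 n N) $$ (i,r) * four_block_mat A B C D $$ (r,s)) = (\<Sum>r<n+N. if r = i then four_block_mat A B C D $$ (r,s) else 0)"
      using i by (intro sum.cong refl) auto
    also have "\<dots> = four_block_mat A B C D $$ (i,s)" using i by (simp add: sum.delta)
    finally show "(\<Sum>r<n+N. mat_adjoint (J1 n N) $$ (i,r) * four_block_mat A B C D $$ (r,s)) * J1 n N $$ (s,j) = four_block_mat A B C D $$ (i,s) * J1 n N $$ (s,j)" by simp
  qed
  also have "\<dots> = (\<Sum>s<n+N. if s = j then four_block_mat A B C D $$ (i,s) else 0)"
    using j by (intro sum.cong refl) auto
  also have "\<dots> = A $$ (i,j)" using i j A D by (simp add: sum.delta)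
  finally show "(mat_adjoint (J1 n N) * four_block_mat A B C D * J1 n N) $$ (i,j) = A $$ (i,j)" .
qed (use A in auto)


lemma B2: assumes A: "A \<in> carrier_mat n n" and B: "B \<in> carrier_mat n N" and C: "C \<in> carrier_mat N n" and D: "D \<in> carrier_mat N N"
  shows "mat_adjoint (J2 n N) * four_block_mat A B C D * J2 n N = D"
proof (rule eq_matI)
  have F: "four_block_mat A B C D \<in> carrier_mat (n+N) (n+N)" using A D by simp
  fix i j assume "i < dim_row D" "j < dim_col D"
  then have i: "i < N" and j: "j < N" using D by auto
  have "(mat_adjoint (J2 n N) * four_block_mat A B C D * J2 n N) $$ (i,j)
    = (\<Sum>s<n+N. (\<Sum>r<n+N. mat_adjoint (J2 n N) $$ (i,r) * four_block_mat A B C D $$ (r,s)) * J2 n N $$ (s,j))"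
    by (rule mult3_index[OF adj_carrier[OF J2_carrier] F J2_carrier i j])
  also have "\<dots> = (\<Sum>s<n+N. four_block_mat A B C D $$ (i+n,s) * J2 n N $$ (s,j))"
  proof (rule sum.cong[OF refl])
    fix s assume s: "s \<in> {..<n+N}"
    have "(\<Sum>r<n+N. mat_adjoint (J2 n N) $$ (i,r) * four_block_mat A B C D $$ (r,s)) = (\<Sum>r<n+N. if r = i+n then four_block_mat A B C D $$ (r,s) else 0)"
      using i by (intro sum.cong refl) auto
    also have "\<dots> = four_block_mat A B C D $$ (i+n,s)" using i by (simp add: sum.delta)
    finally show "(\<Sum>r<n+N. mat_adjoint (J2 n N) $$ (i,r) * four_block_mat A B C D $$ (r,s)) * J2 n N $$ (s,j) = four_block_mat A B C D $$ (i+n,s) * J2 n N $$ (s,j)" by simp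
  qed
  also have "\<dots> = (\<Sum>s<n+N. if s = j+n then four_block_mat A B C D $$ (i+n,s) else 0)"
    using j by (intro sum.cong refl) auto
  also have "\<dots> = D $$ (i,j)" using i j A D by (simp add: sum.delta)
  finally show "(mat_adjoint (J2 n N) * four_block_mat A B C D * J2 n N) $$ (i,j) = D $$ (i,j)" .
qed (use D in auto)

lemma B3: assumes A: "A \<in> carrier_mat n n" and D: "D \<in> carrier_mat N N"
  shows "J1 n N * A * mat_adjoint (J1 n N) + J2 n N * D * mat_adjoint (J2 n N) = four_block_mat A (0\<^sub>m n N) (0\<^sub>m N n) D"
proof (rule eq_matI)
  fix i j assume "i < dim_row (four_block_mat A (0\<^sub>m n N) (0\<^sub>m N n) D)" "j < dim_col (four_block_mat A (0\<^sub>m n N) (0\<^sub>m N n) D)"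
  then have i: "i < n+N" and j: "j < n+N" using A D by auto
  have "(J1 n N * A * mat_adjoint (J1 n N)) $$ (i,j) = (\<Sum>s<n. (\<Sum>r<n. J1 n N $$ (i,r) * A $$ (r,s)) * mat_adjoint (J1 n N) $$ (s,j))"
    by (rule mult3_index[OF J1_carrier A adj_carrier[OF J1_carrier] i j])
  also have "\<dots> = (\<Sum>s<n. (if i < n then A $$ (i,s) else 0) * (if j = s then 1 else 0))"
  proof (rule sum.cong[OF refl])
    fix s assume s: "s \<in> {..<n}"
    have "(\<Sum>r<n. J1 n N $$ (i,r) * A $$ (r,s)) = (\<Sum>r<n. if i = r then A $$ (r,s) else 0)"
      using i by (intro sum.cong refl) auto
    also have "\<dots> = (if i < n then A $$ (i,s) else 0)" by (simp add: sum.delta')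
    finally show "(\<Sum>r<n. J1 n N $$ (i,r) * A $$ (r,s)) * mat_adjoint (J1 n N) $$ (s,j) = (if i < n then A $$ (i,s) else 0) * (if j = s then 1 else 0)"
      using s j by simp
  qed
  also have "\<dots> = (\<Sum>s<n. if j = s then (if i < n then A $$ (i,s) else 0) else 0)"
    by (intro sum.cong refl) auto
  also have "\<dots> = (if j < n \<and> i < n then A $$ (i,j) else 0)" by (simp add: sum.delta')
  finally have e1: "(J1 n N * A * mat_adjoint (J1 n N)) $$ (i,j) = (if j < n \<and> i < n then A $$ (i,j) else 0)" .
  have "(J2 n N * D * mat_adjoint (J2 n N)) $$ (i,j) = (\<Sum>s<N. (\<Sum>r<N. J2 n N $$ (i,r) * D $$ (r,s)) * mat_adjoint (J2 n N) $$ (s,j))"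
    by (rule mult3_index[OF J2_carrier D adj_carrier[OF J2_carrier] i j])
  also have "\<dots> = (\<Sum>s<N. if j = s + n then (if n \<le> i \<and> i - n < N then D $$ (i-n,s) else 0) else 0)"
  proof (rule sum.cong[OF refl])
    fix s assume s: "s \<in> {..<N}"
    have "(\<Sum>r<N. J2 n N $$ (i,r) * D $$ (r,s)) = (\<Sum>r<N. if i = r + n then D $$ (r,s) else 0)"
      using i by (intro sum.cong refl) auto
    also have "\<dots> = (if n \<le> i \<and> i - n < N then D $$ (i-n,s) else 0)" by (rule sum_delta_shift)
    finally show "(\<Sum>r<N. J2 n N $$ (i,r) * D $$ (r,s)) * mat_adjoint (J2 n N) $$ (s,j) = (if j = s + n then (if n \<le> i \<and> i - n < N then D $$ (i-n,s) else 0) else 0)"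
      using s j by simp
  qed
  also have "\<dots> = (if n \<le> j \<and> j - n < N then (if n \<le> i \<and> i - n < N then D $$ (i-n,j-n) else 0) else 0)"
    by (rule sum_delta_shift)
  finally have e2: "(J2 n N * D * mat_adjoint (J2 n N)) $$ (i,j) = (if n \<le> j \<and> j - n < N then (if n \<le> i \<and> i - n < N then D $$ (i-n,j-n) else 0) else 0)" .
  show "(J1 n N * A * mat_adjoint (J1 n N) + J2 n N * D * mat_adjoint (J2 n N)) $$ (i, j) = four_block_mat A (0\<^sub>m n N) (0\<^sub>m N n) D $$ (i, j)"
    using e1 e2 i j A D by auto
qed (use A D in auto)

lemma JJ1: "mat_adjoint (J1 n N) * J1 n N = 1\<^sub>m n"
  using B1[of "1\<^sub>m n" n "0\<^sub>m n N" N "0\<^sub>m N n" "1\<^sub>m N"] by simp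
lemma JJ2: "mat_adjoint (J2 n N) * J2 n N = 1\<^sub>m N"
  using B2[of "1\<^sub>m n" n "0\<^sub>m n N" N "0\<^sub>m N n" "1\<^sub>m N"] by simp



lemma adj_J1c[simp]: "mat_adjoint (J1 n N) \<in> carrier_mat n (n+N)" by simp
lemma adj_J2c[simp]: "mat_adjoint (J2 n N) \<in> carrier_mat N (n+N)" by simp

lemma psd_fb: assumes "psd n S" "psd N T"
  shows "psd (n+N) (four_block_mat S (0\<^sub>m n N) (0\<^sub>m N n) T)"
proof -
  have "four_block_mat S (0\<^sub>m n N) (0\<^sub>m N n) T = J1 n N * S * mat_adjoint (J1 n N) + J2 n N * T * mat_adjoint (J2 n N)"
    by (rule B3[symmetric]) (use assms in \<open>auto dest: psd_carrier\<close>)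
  then show ?thesis
    using psd_add[OF psd_congr[OF assms(1) J1_carrier] psd_congr[OF assms(2) J2_carrier]] by simp
qed

lemma chanJc:
  shows "cptp (n+n) n (\<lambda>X. mat_adjoint (J1 n n) * X * mat_adjoint (mat_adjoint (J1 n n)) + mat_adjoint (J2 n n) * X * mat_adjoint (mat_adjoint (J2 n n)))"
proof (rule kraus2_cptp)
  show "mat_adjoint (mat_adjoint (J1 n n)) * mat_adjoint (J1 n n) + mat_adjoint (mat_adjoint (J2 n n)) * mat_adjoint (J2 n n) = 1\<^sub>m (n + n)"
  proof -
    have "J1 n n * mat_adjoint (J1 n n) = J1 n n * 1\<^sub>m n * mat_adjoint (J1 n n)" by simp
    moreover have "J2 n n * mat_adjoint (J2 n n) = J2 n n * 1\<^sub>m n * mat_adjoint (J2 n n)" by simp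
    ultimately show ?thesis using B3[of "1\<^sub>m n" n "1\<^sub>m n" n] by simp
  qed
qed auto

lemma chanJc_apply: assumes A: "A \<in> carrier_mat n n" and B: "B \<in> carrier_mat n N" and C: "C \<in> carrier_mat N n" and D: "D \<in> carrier_mat N N"
  shows "(\<lambda>X. mat_adjoint (J1 n N) * X * mat_adjoint (mat_adjoint (J1 n N)) + mat_adjoint (J2 n N) * X * mat_adjoint (mat_adjoint (J2 n N))) (four_block_mat A B C D) = A + D"
  using B1[OF A B C D] B2[OF A B C D] by simp

lemma mono_D: assumes a: "prop_a D" and b: "prop_b D" and S: "psd n S" and T: "psd n T" and Z: "psd n Z"
  shows "D S (T + Z) \<le> D S T"
proof -
  let ?E = "\<lambda>X. mat_adjoint (J1 n n) * X * mat_adjoint (mat_adjoint (J1 n n)) + mat_adjoint (J2 n n) * X * mat_adjoint (mat_adjoint (J2 n n))"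
  have Sc: "S \<in> carrier_mat n n" and Tc: "T \<in> carrier_mat n n" and Zc: "Z \<in> carrier_mat n n"
    using S T Z by (auto dest: psd_carrier)
  have e1: "?E (four_block_mat S (0\<^sub>m n n) (0\<^sub>m n n) (0\<^sub>m n n)) = S"
    using chanJc_apply[OF Sc, of "0\<^sub>m n n" n "0\<^sub>m n n" "0\<^sub>m n n"] Sc by simp
  have e2: "?E (four_block_mat T (0\<^sub>m n n) (0\<^sub>m n n) Z) = T + Z"
    using chanJc_apply[OF Tc, of "0\<^sub>m n n" n "0\<^sub>m n n" Z] Zc by simp
  have "D (?E (four_block_mat S (0\<^sub>m n n) (0\<^sub>m n n) (0\<^sub>m n n))) (?E (four_block_mat T (0\<^sub>m n n) (0\<^sub>m n n) Z))
     \<le> D (four_block_mat S (0\<^sub>m n n) (0\<^sub>m n n) (0\<^sub>m n n)) (four_block_mat T (0\<^sub>m n n) (0\<^sub>m n n) Z)"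
    using a chanJc[of n] psd_fb[OF S psd_zero] psd_fb[OF T Z] unfolding prop_a_def by blast
  also have "\<dots> = D S T" using b S T Z unfolding prop_b_def by blast
  finally show ?thesis unfolding e1 e2 .
qed


lemma congr_comp: assumes A: "(A::complex mat) \<in> carrier_mat a b" and B: "B \<in> carrier_mat b c" and X: "X \<in> carrier_mat c c"
  shows "(A*B) * X * mat_adjoint (A*B) = A * (B * X * mat_adjoint B) * mat_adjoint A"
proof -
  have A': "mat_adjoint A \<in> carrier_mat b a" and B': "mat_adjoint B \<in> carrier_mat c b" using A B by auto
  have BX: "B * X \<in> carrier_mat b c" using B X by simp
  have BXB: "B * X * mat_adjoint B \<in> carrier_mat b b" using mult_carrier_mat[OF BX B'] .
  have BA: "mat_adjoint B * mat_adjoint A \<in> carrier_mat c a" using mult_carrier_mat[OF B' A'] .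
  have "(A*B) * X * mat_adjoint (A*B) = (A*B) * X * (mat_adjoint B * mat_adjoint A)"
    by (simp add: adj_mult[OF A B])
  also have "\<dots> = A * (B * X) * (mat_adjoint B * mat_adjoint A)"
    by (simp only: assoc_mult_mat[OF A B X])
  also have "\<dots> = A * ((B * X) * (mat_adjoint B * mat_adjoint A))"
    by (rule assoc_mult_mat[OF A BX BA])
  also have "\<dots> = A * ((B * X * mat_adjoint B) * mat_adjoint A)"
    by (simp only: assoc_mult_mat[OF BX B' A', symmetric])
  also have "\<dots> = A * (B * X * mat_adjoint B) * mat_adjoint A"
    by (rule assoc_mult_mat[OF A BXB A', symmetric])
  finally show ?thesis .
qed

lemma adjprod: assumes A: "(A::complex mat) \<in> carrier_mat a b" and B: "B \<in> carrier_mat b c"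
  shows "mat_adjoint (A*B) * (A*B) = mat_adjoint B * (mat_adjoint A * A) * B"
proof -
  have A': "mat_adjoint A \<in> carrier_mat b a" and B': "mat_adjoint B \<in> carrier_mat c b" using A B by auto
  have AA: "mat_adjoint A * A \<in> carrier_mat b b" using mult_carrier_mat[OF A' A] .
  have AB: "A * B \<in> carrier_mat a c" using mult_carrier_mat[OF A B] .
  have "mat_adjoint (A*B) * (A*B) = (mat_adjoint B * mat_adjoint A) * (A * B)"
    by (simp add: adj_mult[OF A B])
  also have "\<dots> = mat_adjoint B * (mat_adjoint A * (A * B))"
    by (rule assoc_mult_mat[OF B' A' AB])
  also have "\<dots> = mat_adjoint B * ((mat_adjoint A * A) * B)"
    by (simp only: assoc_mult_mat[OF A' A B, symmetric])
  also have "\<dots> = mat_adjoint B * (mat_adjoint A * A) * B"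
    by (rule assoc_mult_mat[OF B' AA B, symmetric])
  finally show ?thesis .
qed

lemma chanF:
  assumes W: "W \<in> carrier_mat N n" and WW: "mat_adjoint W * W = 1\<^sub>m n"
  shows "cptp (n+N) N (\<lambda>X. (W * mat_adjoint (J1 n N)) * X * mat_adjoint (W * mat_adjoint (J1 n N)) + mat_adjoint (J2 n N) * X * mat_adjoint (mat_adjoint (J2 n N)))"
proof (rule kraus2_cptp)
  show "W * mat_adjoint (J1 n N) \<in> carrier_mat N (n + N)" using mult_carrier_mat[OF W adj_J1c] .
  show "mat_adjoint (J2 n N) \<in> carrier_mat N (n + N)" by simp
  have "mat_adjoint (W * mat_adjoint (J1 n N)) * (W * mat_adjoint (J1 n N)) = J1 n N * 1\<^sub>m n * mat_adjoint (J1 n N)"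
    using adjprod[OF W adj_J1c] WW by simp
  moreover have "mat_adjoint (mat_adjoint (J2 n N)) * mat_adjoint (J2 n N) = J2 n N * 1\<^sub>m N * mat_adjoint (J2 n N)"
    by simp
  ultimately show "mat_adjoint (W * mat_adjoint (J1 n N)) * (W * mat_adjoint (J1 n N)) +
    mat_adjoint (mat_adjoint (J2 n N)) * mat_adjoint (J2 n N) = 1\<^sub>m (n + N)"
    using B3[of "1\<^sub>m n" n "1\<^sub>m N" N] by simp
qed

lemma chanF_apply:
  assumes W: "W \<in> carrier_mat N n" and A: "A \<in> carrier_mat n n" and B: "B \<in> carrier_mat n N" and C: "C \<in> carrier_mat N n" and D: "D \<in> carrier_mat N N"
  shows "(\<lambda>X. (W * mat_adjoint (J1 n N)) * X * mat_adjoint (W * mat_adjoint (J1 n N)) + mat_adjoint (J2 n N) * X * mat_adjoint (mat_adjoint (J2 n N))) (four_block_mat A B C D)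
    = W * A * mat_adjoint W + D"
proof -
  have F: "four_block_mat A B C D \<in> carrier_mat (n+N) (n+N)" using A D by simp
  show ?thesis
    using congr_comp[OF W adj_J1c F] B1[OF A B C D] B2[OF A B C D] by simp
qed

lemma chanG:
  assumes W: "W \<in> carrier_mat N n" and WW: "mat_adjoint W * W = 1\<^sub>m n"
  defines "R \<equiv> 1\<^sub>m N - W * mat_adjoint W"
  shows "cptp N (n+N) (\<lambda>X. (J1 n N * mat_adjoint W) * X * mat_adjoint (J1 n N * mat_adjoint W) + (J2 n N * R) * X * mat_adjoint (J2 n N * R))"
proof (rule kraus2_cptp)
  have W': "mat_adjoint W \<in> carrier_mat n N" using W by simp
  have P: "W * mat_adjoint W \<in> carrier_mat N N" using W W' by simp
  have Rc: "R \<in> carrier_mat N N" unfolding R_def using P by (rule minus_carrier_mat)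
  show "J1 n N * mat_adjoint W \<in> carrier_mat (n + N) N" using mult_carrier_mat[OF J1_carrier W'] .
  show "J2 n N * R \<in> carrier_mat (n + N) N" using mult_carrier_mat[OF J2_carrier Rc] .
  have PP: "W * mat_adjoint W * (W * mat_adjoint W) = W * mat_adjoint W"
  proof -
    have "W * mat_adjoint W * (W * mat_adjoint W) = W * (mat_adjoint W * (W * mat_adjoint W))"
      by (rule assoc_mult_mat[OF W W' P])
    also have "mat_adjoint W * (W * mat_adjoint W) = (mat_adjoint W * W) * mat_adjoint W"
      by (rule assoc_mult_mat[OF W' W W', symmetric])
    finally show ?thesis using WW left_mult_one_mat[OF W'] by simp
  qed
  have RA: "mat_adjoint R = R"
    unfolding R_def by (subst adj_minus[of _ N N]) (use P W in \<open>auto simp: adj_mult[OF W W']\<close>)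
  have RR: "R * R = R"
  proof -
    have PR: "W * mat_adjoint W * R = 0\<^sub>m N N"
    proof -
      have "W * mat_adjoint W * R = W * mat_adjoint W * 1\<^sub>m N - W * mat_adjoint W * (W * mat_adjoint W)"
        unfolding R_def by (rule mult_minus_distrib_mat[OF P one_carrier_mat P])
      also have "\<dots> = 0\<^sub>m N N" unfolding PP right_mult_one_mat[OF P] using P by (intro eq_matI) auto
      finally show ?thesis .
    qed
    have "R * R = 1\<^sub>m N * R - W * mat_adjoint W * R"
      by (subst (1) R_def, rule minus_mult_distrib_mat[OF one_carrier_mat P Rc])
    also have "\<dots> = R" unfolding PR using Rc by (intro eq_matI) auto
    finally show ?thesis .
  qed
  have "mat_adjoint (J1 n N * mat_adjoint W) * (J1 n N * mat_adjoint W) = W * mat_adjoint W"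
    using adjprod[OF J1_carrier W'] JJ1 W by simp
  moreover have "mat_adjoint (J2 n N * R) * (J2 n N * R) = R"
    using adjprod[OF J2_carrier Rc] JJ2 RA RR Rc by simp
  ultimately show "mat_adjoint (J1 n N * mat_adjoint W) * (J1 n N * mat_adjoint W) + mat_adjoint (J2 n N * R) * (J2 n N * R) = 1\<^sub>m N"
    unfolding R_def using P by (intro eq_matI) auto
qed

lemma chanG_apply:
  assumes W: "W \<in> carrier_mat N n" and X: "X \<in> carrier_mat N N" and Rc: "R \<in> carrier_mat N N"
  shows "(\<lambda>X. (J1 n N * mat_adjoint W) * X * mat_adjoint (J1 n N * mat_adjoint W) + (J2 n N * R) * X * mat_adjoint (J2 n N * R)) X
    = four_block_mat (mat_adjoint W * X * W) (0\<^sub>m n N) (0\<^sub>m N n) (R * X * mat_adjoint R)"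
proof -
  have W': "mat_adjoint W \<in> carrier_mat n N" using W by simp
  have "mat_adjoint W * X * W \<in> carrier_mat n n" using mult_carrier_mat[OF mult_carrier_mat[OF W' X] W] .
  moreover have "R * X * mat_adjoint R \<in> carrier_mat N N" using mult_carrier_mat[OF mult_carrier_mat[OF Rc X] adj_carrier[OF Rc]] .
  ultimately show ?thesis
    using congr_comp[OF J1_carrier W' X] congr_comp[OF J2_carrier Rc X] B3 by simp
qed



lemma psd_kron1: assumes S: "psd m \<sigma>" shows "psd (k*m) (kron (1\<^sub>m k) \<sigma>)"
  unfolding psd_def
proof (intro conjI ballI)
  have Sc: "\<sigma> \<in> carrier_mat m m" using S by (rule psd_carrier)
  show Kc: "kron (1\<^sub>m k) \<sigma> \<in> carrier_mat (k*m) (k*m)" using Sc by simp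
  fix v :: "complex vec" assume v: "v \<in> carrier_vec (k*m)"
  define w where "w a = vec m (\<lambda>b. v $ (a*m+b))" for a
  have w: "w a \<in> carrier_vec m" for a unfolding w_def by simp
  have "conjugate v \<bullet> (kron (1\<^sub>m k) \<sigma> *\<^sub>v v) = (\<Sum>p<k*m. \<Sum>q<k*m. cnj (v$p) * kron (1\<^sub>m k) \<sigma> $$ (p,q) * v$q)"
    by (rule qf_sum[OF Kc v])
  also have "\<dots> = (\<Sum>p<k*m. \<Sum>q<k*m. if q div m = p div m then cnj (v$p) * \<sigma> $$ (p mod m, q mod m) * v$q else 0)"
  proof (intro sum.cong refl)
    fix p q assume p: "p \<in> {..<k*m}" and q: "q \<in> {..<k*m}"
    then have "m > 0" by (auto intro: ccontr)
    moreover have "p div m < k" "q div m < k" using p q by (auto simp: less_mult_imp_div_less)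
    ultimately show "cnj (v$p) * kron (1\<^sub>m k) \<sigma> $$ (p,q) * v$q = (if q div m = p div m then cnj (v$p) * \<sigma> $$ (p mod m, q mod m) * v$q else 0)"
      using p q Sc by auto
  qed
  also have "\<dots> = (\<Sum>p<k*m. \<Sum>b'<m. cnj (v$p) * \<sigma> $$ (p mod m, b') * v$((p div m)*m+b'))"
  proof (rule sum.cong[OF refl])
    fix p assume p: "p \<in> {..<k*m}"
    then have "p div m < k" by (auto simp: less_mult_imp_div_less)
    then show "(\<Sum>q<k*m. if q div m = p div m then cnj (v$p) * \<sigma> $$ (p mod m, q mod m) * v$q else 0) = (\<Sum>b'<m. cnj (v$p) * \<sigma> $$ (p mod m, b') * v$((p div m)*m+b'))"
      by (subst sum_collapse) (auto intro!: sum.cong)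
  qed
  also have "\<dots> = (\<Sum>a<k. \<Sum>b<m. \<Sum>b'<m. cnj (v$(a*m+b)) * \<sigma> $$ (b, b') * v$(a*m+b'))"
    by (subst sum_mult_split) (auto intro!: sum.cong)
  also have "\<dots> = (\<Sum>a<k. conjugate (w a) \<bullet> (\<sigma> *\<^sub>v w a))"
    by (rule sum.cong[OF refl], subst qf_sum[OF Sc w]) (auto simp: w_def intro!: sum.cong)
  finally have eq: "conjugate v \<bullet> (kron (1\<^sub>m k) \<sigma> *\<^sub>v v) = (\<Sum>a<k. conjugate (w a) \<bullet> (\<sigma> *\<^sub>v w a))" .
  have "\<And>a. conjugate (w a) \<bullet> (\<sigma> *\<^sub>v w a) \<in> \<real> \<and> 0 \<le> Re (conjugate (w a) \<bullet> (\<sigma> *\<^sub>v w a))"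
    using S w unfolding psd_def by blast
  then show "conjugate v \<bullet> (kron (1\<^sub>m k) \<sigma> *\<^sub>v v) \<in> \<real>" "0 \<le> Re (conjugate v \<bullet> (kron (1\<^sub>m k) \<sigma> *\<^sub>v v))"
    unfolding eq by (auto simp: Re_sum intro: sum_nonneg)
qed

lemma ptrace_carrier[simp]: "ptrace_A dA dB \<rho> \<in> carrier_mat dB dB"
  unfolding ptrace_A_def by simp
lemma ptrace_index: "j < dB \<Longrightarrow> k < dB \<Longrightarrow> ptrace_A dA dB \<rho> $$ (j,k) = (\<Sum>i<dA. \<rho> $$ (i*dB + j, i*dB + k))"
  unfolding ptrace_A_def by simp

lemma psd_ptrace: assumes R: "psd (dA*dB) \<rho>" shows "psd dB (ptrace_A dA dB \<rho>)"
  unfolding psd_def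
proof (intro conjI ballI)
  have Rc: "\<rho> \<in> carrier_mat (dA*dB) (dA*dB)" using R by (rule psd_carrier)
  show Pc: "ptrace_A dA dB \<rho> \<in> carrier_mat dB dB" by simp
  fix v :: "complex vec" assume v: "v \<in> carrier_vec dB"
  define w where "w i = vec (dA*dB) (\<lambda>r. if r div dB = i then v $ (r mod dB) else 0)" for i
  have w: "w i \<in> carrier_vec (dA*dB)" for i unfolding w_def by simp
  have "conjugate v \<bullet> (ptrace_A dA dB \<rho> *\<^sub>v v) = (\<Sum>j<dB. \<Sum>k<dB. cnj (v$j) * ptrace_A dA dB \<rho> $$ (j,k) * v$k)"
    by (rule qf_sum[OF Pc v])
  also have "\<dots> = (\<Sum>j<dB. \<Sum>k<dB. \<Sum>i<dA. cnj (v$j) * \<rho> $$ (i*dB + j, i*dB + k) * v$k)"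
    by (intro sum.cong refl) (simp add: ptrace_index sum_distrib_left sum_distrib_right)
  also have "\<dots> = (\<Sum>i<dA. \<Sum>j<dB. \<Sum>k<dB. cnj (v$j) * \<rho> $$ (i*dB + j, i*dB + k) * v$k)"
  proof -
    have "(\<Sum>j<dB. \<Sum>k<dB. \<Sum>i<dA. cnj (v$j) * \<rho> $$ (i*dB + j, i*dB + k) * v$k) = (\<Sum>j<dB. \<Sum>i<dA. \<Sum>k<dB. cnj (v$j) * \<rho> $$ (i*dB + j, i*dB + k) * v$k)"
      by (rule sum.cong[OF refl], rule sum.swap)
    also have "\<dots> = (\<Sum>i<dA. \<Sum>j<dB. \<Sum>k<dB. cnj (v$j) * \<rho> $$ (i*dB + j, i*dB + k) * v$k)"
      by (rule sum.swap)
    finally show ?thesis .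
  qed
  also have "\<dots> = (\<Sum>i<dA. conjugate (w i) \<bullet> (\<rho> *\<^sub>v w i))"
  proof (rule sum.cong[OF refl])
    fix i assume i: "i \<in> {..<dA}"
    have "conjugate (w i) \<bullet> (\<rho> *\<^sub>v w i) = (\<Sum>r<dA*dB. \<Sum>s<dA*dB. cnj (w i $ r) * \<rho> $$ (r,s) * w i $ s)"
      by (rule qf_sum[OF Rc w])
    also have "\<dots> = (\<Sum>r<dA*dB. if r div dB = i then (\<Sum>s<dA*dB. if s div dB = i then cnj (v $ (r mod dB)) * \<rho> $$ (r,s) * v $ (s mod dB) else 0) else 0)"
      by (intro sum.cong refl) (auto simp: w_def intro!: sum.cong)
    also have "\<dots> = (\<Sum>j<dB. \<Sum>k<dB. cnj (v$j) * \<rho> $$ (i*dB + j, i*dB + k) * v$k)"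
      using i by (subst sum_collapse) (auto intro!: sum.cong simp: sum_collapse)
    finally show "(\<Sum>j<dB. \<Sum>k<dB. cnj (v$j) * \<rho> $$ (i*dB + j, i*dB + k) * v$k) = conjugate (w i) \<bullet> (\<rho> *\<^sub>v w i)" by simp
  qed
  finally have eq: "conjugate v \<bullet> (ptrace_A dA dB \<rho> *\<^sub>v v) = (\<Sum>i<dA. conjugate (w i) \<bullet> (\<rho> *\<^sub>v w i))" .
  have "\<And>i. conjugate (w i) \<bullet> (\<rho> *\<^sub>v w i) \<in> \<real> \<and> 0 \<le> Re (conjugate (w i) \<bullet> (\<rho> *\<^sub>v w i))"
    using R w unfolding psd_def by blast
  then show "conjugate v \<bullet> (ptrace_A dA dB \<rho> *\<^sub>v v) \<in> \<real>" "0 \<le> Re (conjugate v \<bullet> (ptrace_A dA dB \<rho> *\<^sub>v v))"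
    unfolding eq by (auto simp: Re_sum intro: sum_nonneg)
qed


lemma swap2: "(\<Sum>i\<in>I. \<Sum>c\<in>C. \<Sum>d\<in>D. F i c d) = (\<Sum>c\<in>C. \<Sum>d\<in>D. \<Sum>i\<in>I. F i c d)"
  by (subst sum.swap) (rule sum.cong[OF refl], rule sum.swap)
lemma swap3: "(\<Sum>i\<in>I. \<Sum>b\<in>B. \<Sum>c\<in>C. \<Sum>d\<in>D. F i b c d) = (\<Sum>b\<in>B. \<Sum>c\<in>C. \<Sum>d\<in>D. \<Sum>i\<in>I. F i b c d)"
  by (subst sum.swap) (rule sum.cong[OF refl], rule swap2)
lemma swap4: "(\<Sum>i\<in>I. \<Sum>a\<in>A. \<Sum>b\<in>B. \<Sum>c\<in>C. \<Sum>d\<in>D. F i a b c d) = (\<Sum>a\<in>A. \<Sum>b\<in>B. \<Sum>c\<in>C. \<Sum>d\<in>D. \<Sum>i\<in>I. F i a b c d)"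
  by (subst sum.swap) (rule sum.cong[OF refl], rule swap3)

lemma lt_mult_split: "(a::nat) < A \<Longrightarrow> b < B \<Longrightarrow> a*B+b < A*B"
proof -
  assume a: "a < A" and b: "b < B"
  have "a*B+b < (a+1)*B" using b by simp
  also have "\<dots> \<le> A*B" using a by (intro mult_le_mono1) simp
  finally show ?thesis .
qed

lemma conj_entry:
  assumes VA: "VA \<in> carrier_mat dA' dA" and VB: "VB \<in> carrier_mat dB' dB" and R: "\<rho> \<in> carrier_mat (dA*dB) (dA*dB)"
    and x: "x < dA'*dB'" and y: "y < dA'*dB'"
  shows "(kron VA VB * \<rho> * mat_adjoint (kron VA VB)) $$ (x,y)
    = (\<Sum>a2<dA. \<Sum>b2<dB. \<Sum>a<dA. \<Sum>b<dB. VA $$ (x div dB', a) * VB $$ (x mod dB', b) * \<rho> $$ (a*dB+b, a2*dB+b2) * (cnj (VA $$ (y div dB', a2)) * cnj (VB $$ (y mod dB', b2))))"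
proof -
  have W: "kron VA VB \<in> carrier_mat (dA'*dB') (dA*dB)" using VA VB by simp
  have dB': "dB' > 0" using x by (auto intro: ccontr)
  have xd: "x div dB' < dA'" "y div dB' < dA'" using x y by (auto simp: less_mult_imp_div_less)
  have xm: "x mod dB' < dB'" "y mod dB' < dB'" using dB' by auto
  have "(kron VA VB * \<rho> * mat_adjoint (kron VA VB)) $$ (x,y) = (\<Sum>s<dA*dB. (\<Sum>r<dA*dB. kron VA VB $$ (x,r) * \<rho> $$ (r,s)) * mat_adjoint (kron VA VB) $$ (s,y))"
    by (rule mult3_index[OF W R adj_carrier[OF W] x y])
  also have "\<dots> = (\<Sum>a2<dA. \<Sum>b2<dB. (\<Sum>a<dA. \<Sum>b<dB. kron VA VB $$ (x,a*dB+b) * \<rho> $$ (a*dB+b,a2*dB+b2)) * mat_adjoint (kron VA VB) $$ (a2*dB+b2,y))"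
    by (simp only: sum_mult_split)
  also have "\<dots> = (\<Sum>a2<dA. \<Sum>b2<dB. \<Sum>a<dA. \<Sum>b<dB. VA $$ (x div dB', a) * VB $$ (x mod dB', b) * \<rho> $$ (a*dB+b, a2*dB+b2) * (cnj (VA $$ (y div dB', a2)) * cnj (VB $$ (y mod dB', b2))))"
  proof (intro sum.cong refl)
    fix a2 b2 assume a2: "a2 \<in> {..<dA}" and b2: "b2 \<in> {..<dB}"
    have s: "a2*dB+b2 < dA*dB" using a2 b2 by (simp add: lt_mult_split)
    have "(\<Sum>a<dA. \<Sum>b<dB. kron VA VB $$ (x,a*dB+b) * \<rho> $$ (a*dB+b,a2*dB+b2)) * mat_adjoint (kron VA VB) $$ (a2*dB+b2,y)
      = (\<Sum>a<dA. \<Sum>b<dB. kron VA VB $$ (x,a*dB+b) * \<rho> $$ (a*dB+b,a2*dB+b2) * mat_adjoint (kron VA VB) $$ (a2*dB+b2,y))"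
      by (simp add: sum_distrib_right)
    also have "\<dots> = (\<Sum>a<dA. \<Sum>b<dB. VA $$ (x div dB', a) * VB $$ (x mod dB', b) * \<rho> $$ (a*dB+b, a2*dB+b2) * (cnj (VA $$ (y div dB', a2)) * cnj (VB $$ (y mod dB', b2))))"
    proof (intro sum.cong refl)
      fix a b assume a: "a \<in> {..<dA}" and b: "b \<in> {..<dB}"
      have r: "a*dB+b < dA*dB" using a b by (simp add: lt_mult_split)
      show "kron VA VB $$ (x,a*dB+b) * \<rho> $$ (a*dB+b,a2*dB+b2) * mat_adjoint (kron VA VB) $$ (a2*dB+b2,y)
        = VA $$ (x div dB', a) * VB $$ (x mod dB', b) * \<rho> $$ (a*dB+b, a2*dB+b2) * (cnj (VA $$ (y div dB', a2)) * cnj (VB $$ (y mod dB', b2)))"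
        using VA VB x y r s a b a2 b2 by simp
    qed
    finally show "(\<Sum>a<dA. \<Sum>b<dB. kron VA VB $$ (x,a*dB+b) * \<rho> $$ (a*dB+b,a2*dB+b2)) * mat_adjoint (kron VA VB) $$ (a2*dB+b2,y)
      = (\<Sum>a<dA. \<Sum>b<dB. VA $$ (x div dB', a) * VB $$ (x mod dB', b) * \<rho> $$ (a*dB+b, a2*dB+b2) * (cnj (VA $$ (y div dB', a2)) * cnj (VB $$ (y mod dB', b2))))" .
  qed
  finally show ?thesis .
qed


lemma ptrace_conj:
  assumes VA: "VA \<in> carrier_mat dA' dA" and VB: "VB \<in> carrier_mat dB' dB" and R: "\<rho> \<in> carrier_mat (dA*dB) (dA*dB)"
    and iso: "mat_adjoint VA * VA = 1\<^sub>m dA"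
  shows "ptrace_A dA' dB' (kron VA VB * \<rho> * mat_adjoint (kron VA VB)) = VB * ptrace_A dA dB \<rho> * mat_adjoint VB"
proof (rule eq_matI)
  fix j k assume "j < dim_row (VB * ptrace_A dA dB \<rho> * mat_adjoint VB)" "k < dim_col (VB * ptrace_A dA dB \<rho> * mat_adjoint VB)"
  then have j: "j < dB'" and k: "k < dB'" using VB by auto
  define f where "f a b a2 b2 = VB $$ (j, b) * \<rho> $$ (a*dB+b, a2*dB+b2) * cnj (VB $$ (k, b2))" for a b a2 b2
  have delta: "(\<Sum>i<dA'. VA $$ (i,a) * cnj (VA $$ (i,a2))) = (if a = a2 then 1 else 0)" if a: "a < dA" and a2: "a2 < dA" for a a2
  proof -
    have "(mat_adjoint VA * VA) $$ (a2,a) = (\<Sum>i<dA'. cnj (VA $$ (i,a2)) * VA $$ (i,a))"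
      using VA a a2 by (simp add: scalar_prod_def atLeast0LessThan)
    then have h: "(\<Sum>i<dA'. VA $$ (i,a) * cnj (VA $$ (i,a2))) = (if a2 = a then 1 else 0)"
      using iso a a2 by (simp add: mult.commute)
    then show ?thesis by auto
  qed
  have "ptrace_A dA' dB' (kron VA VB * \<rho> * mat_adjoint (kron VA VB)) $$ (j,k)
     = (\<Sum>i<dA'. (kron VA VB * \<rho> * mat_adjoint (kron VA VB)) $$ (i*dB'+j, i*dB'+k))"
    using j k by (simp add: ptrace_index)
  also have "\<dots> = (\<Sum>i<dA'. \<Sum>a2<dA. \<Sum>b2<dB. \<Sum>a<dA. \<Sum>b<dB. VA $$ (i,a) * cnj (VA $$ (i,a2)) * f a b a2 b2)"
  proof (rule sum.cong[OF refl])
    fix i assume i: "i \<in> {..<dA'}"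
    have xy: "i*dB'+j < dA'*dB'" "i*dB'+k < dA'*dB'" using i j k by (simp_all add: lt_mult_split)
    show "(kron VA VB * \<rho> * mat_adjoint (kron VA VB)) $$ (i*dB'+j, i*dB'+k) = (\<Sum>a2<dA. \<Sum>b2<dB. \<Sum>a<dA. \<Sum>b<dB. VA $$ (i,a) * cnj (VA $$ (i,a2)) * f a b a2 b2)"
      unfolding conj_entry[OF VA VB R xy] using j k by (intro sum.cong refl) (simp add: f_def mult_ac)
  qed
  also have "\<dots> = (\<Sum>a2<dA. \<Sum>b2<dB. \<Sum>a<dA. \<Sum>b<dB. \<Sum>i<dA'. VA $$ (i,a) * cnj (VA $$ (i,a2)) * f a b a2 b2)"
    by (rule swap4)
  also have "\<dots> = (\<Sum>a2<dA. \<Sum>b2<dB. \<Sum>a<dA. if a = a2 then (\<Sum>b<dB. f a b a2 b2) else 0)"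
    by (intro sum.cong refl) (auto simp: sum_distrib_right[symmetric] delta sum_distrib_left)
  also have "\<dots> = (\<Sum>a2<dA. \<Sum>b2<dB. \<Sum>b<dB. f a2 b a2 b2)"
    by (rule sum.cong[OF refl], rule sum.cong[OF refl]) (simp add: sum.delta)
  also have "\<dots> = (\<Sum>b2<dB. \<Sum>b<dB. \<Sum>a<dA. f a b a b2)"
    by (rule swap2)
  also have "\<dots> = (VB * ptrace_A dA dB \<rho> * mat_adjoint VB) $$ (j,k)"
    by (subst mult3_index[OF VB ptrace_carrier adj_carrier[OF VB] j k])
       (use VB j k in \<open>auto simp: f_def ptrace_index sum_distrib_left sum_distrib_right mult_ac intro!: sum.cong\<close>)
  finally show "ptrace_A dA' dB' (kron VA VB * \<rho> * mat_adjoint (kron VA VB)) $$ (j,k) = (VB * ptrace_A dA dB \<rho> * mat_adjoint VB) $$ (j,k)" .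
qed (use VB in \<open>auto simp: ptrace_A_def\<close>)



lemma iso_PV: assumes V: "(V::complex mat) \<in> carrier_mat m n" and iso: "mat_adjoint V * V = 1\<^sub>m n" and M: "M \<in> carrier_mat n k"
  shows "V * mat_adjoint V * (V * M) = V * M"
proof -
  have V': "mat_adjoint V \<in> carrier_mat n m" using V by simp
  have VM: "V * M \<in> carrier_mat m k" using V M by simp
  have "V * mat_adjoint V * (V * M) = V * (mat_adjoint V * (V * M))" by (rule assoc_mult_mat[OF V V' VM])
  also have "mat_adjoint V * (V * M) = (mat_adjoint V * V) * M" by (rule assoc_mult_mat[OF V' V M, symmetric])
  finally show ?thesis using iso M by simp
qed

lemma iso_VP: assumes V: "(V::complex mat) \<in> carrier_mat m n" and iso: "mat_adjoint V * V = 1\<^sub>m n" and M: "M \<in> carrier_mat k n"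
  shows "M * mat_adjoint V * (V * mat_adjoint V) = M * mat_adjoint V"
proof -
  have V': "mat_adjoint V \<in> carrier_mat n m" using V by simp
  have MV: "M * mat_adjoint V \<in> carrier_mat k m" using V' M by simp
  have "M * mat_adjoint V * (V * mat_adjoint V) = (M * mat_adjoint V * V) * mat_adjoint V" by (rule assoc_mult_mat[OF MV V V', symmetric])
  also have "M * mat_adjoint V * V = M * (mat_adjoint V * V)" by (rule assoc_mult_mat[OF M V' V])
  finally show ?thesis using iso M by simp
qed

lemma W_iso: assumes VA: "VA \<in> carrier_mat dA' dA" and VB: "VB \<in> carrier_mat dB' dB"
  and iA: "mat_adjoint VA * VA = 1\<^sub>m dA" and iB: "mat_adjoint VB * VB = 1\<^sub>m dB"
  shows "mat_adjoint (kron VA VB) * kron VA VB = 1\<^sub>m (dA*dB)"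
  unfolding kron_adj using kron_mult[OF adj_carrier[OF VA] adj_carrier[OF VB] VA VB] iA iB by simp

lemma alg_F: assumes VA: "VA \<in> carrier_mat dA' dA" and VB: "VB \<in> carrier_mat dB' dB"
  and iA: "mat_adjoint VA * VA = 1\<^sub>m dA" and iB: "mat_adjoint VB * VB = 1\<^sub>m dB"
  and S: "\<sigma> \<in> carrier_mat dB dB"
  defines "W \<equiv> kron VA VB" and "X \<equiv> kron (1\<^sub>m dA') (VB * \<sigma> * mat_adjoint VB)"
  defines "R \<equiv> 1\<^sub>m (dA'*dB') - W * mat_adjoint W"
  shows "W * kron (1\<^sub>m dA) \<sigma> * mat_adjoint W + R * X * mat_adjoint R = X"
proof -
  have VA': "mat_adjoint VA \<in> carrier_mat dA dA'" and VB': "mat_adjoint VB \<in> carrier_mat dB dB'" using VA VB by auto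
  define P where "P = VA * mat_adjoint VA"
  define PB where "PB = VB * mat_adjoint VB"
  define Y where "Y = VB * \<sigma> * mat_adjoint VB"
  have Pc: "P \<in> carrier_mat dA' dA'" unfolding P_def using VA VA' by simp
  have PBc: "PB \<in> carrier_mat dB' dB'" unfolding PB_def using VB VB' by simp
  have VBs: "VB * \<sigma> \<in> carrier_mat dB' dB" using VB S by simp
  have sVB: "\<sigma> * mat_adjoint VB \<in> carrier_mat dB dB'" using VB' S by simp
  have Yc: "Y \<in> carrier_mat dB' dB'" unfolding Y_def using mult_carrier_mat[OF VBs VB'] .
  have Wc: "W \<in> carrier_mat (dA'*dB') (dA*dB)" unfolding W_def using VA VB by simp
  have W': "mat_adjoint W \<in> carrier_mat (dA*dB) (dA'*dB')" using Wc by simp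
  have Wadj: "mat_adjoint W = kron (mat_adjoint VA) (mat_adjoint VB)" unfolding W_def kron_adj ..
  have Xc: "X \<in> carrier_mat (dA'*dB') (dA'*dB')" unfolding X_def Y_def[symmetric] using Yc by simp
  have X_def': "X = kron (1\<^sub>m dA') Y" unfolding X_def Y_def ..
  define M where "M = kron P Y"
  have Mc: "M \<in> carrier_mat (dA'*dB') (dA'*dB')" unfolding M_def using Pc Yc by simp
  have PP: "P * P = P" unfolding P_def by (rule iso_PV[OF VA iA VA'])
  have PBY: "PB * Y = Y"
  proof -
    have "Y = VB * (\<sigma> * mat_adjoint VB)" unfolding Y_def by (rule assoc_mult_mat[OF VB S VB'])
    then show ?thesis unfolding PB_def using iso_PV[OF VB iB sVB] by simp
  qed
  have YPB: "Y * PB = Y" unfolding Y_def PB_def by (rule iso_VP[OF VB iB VBs])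
  have m1: "W * kron (1\<^sub>m dA) \<sigma> * mat_adjoint W = M"
  proof -
    have "W * kron (1\<^sub>m dA) \<sigma> = kron (VA * 1\<^sub>m dA) (VB * \<sigma>)" unfolding W_def by (rule kron_mult[OF VA VB one_carrier_mat S])
    also have "VA * 1\<^sub>m dA = VA" using VA by simp
    finally have "W * kron (1\<^sub>m dA) \<sigma> * mat_adjoint W = kron VA (VB * \<sigma>) * kron (mat_adjoint VA) (mat_adjoint VB)" unfolding Wadj by simp
    also have "\<dots> = kron (VA * mat_adjoint VA) (VB * \<sigma> * mat_adjoint VB)" by (rule kron_mult[OF VA VBs VA' VB'])
    finally show ?thesis unfolding M_def P_def Y_def .
  qed
  define Z where "Z = W * mat_adjoint W"
  have Zc: "Z \<in> carrier_mat (dA'*dB') (dA'*dB')" unfolding Z_def using Wc W' by simp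
  have Zk: "Z = kron P PB" unfolding Z_def P_def PB_def Wadj unfolding W_def by (rule kron_mult[OF VA VB VA' VB'])
  have ZX: "Z * X = M" unfolding Zk X_def' M_def using kron_mult[OF Pc PBc one_carrier_mat Yc] PBY Pc by simp
  have XZ: "X * Z = M" unfolding Zk X_def' M_def using kron_mult[OF one_carrier_mat Yc Pc PBc] YPB Pc by simp
  have MZ: "M * Z = M" unfolding Zk M_def using kron_mult[OF Pc Yc Pc PBc] YPB PP by simp
  have Rc: "R \<in> carrier_mat (dA'*dB') (dA'*dB')" unfolding R_def Z_def[symmetric] using Zc by (rule minus_carrier_mat)
  have RA: "mat_adjoint R = R"
    unfolding R_def Z_def[symmetric] by (subst adj_minus[of _ "dA'*dB'" "dA'*dB'"]) (use Zc Wc in \<open>auto simp: Z_def adj_mult[OF Wc W']\<close>)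
  have RX: "R * X = X - M"
    unfolding R_def Z_def[symmetric] using minus_mult_distrib_mat[OF one_carrier_mat Zc Xc] ZX Xc by simp
  have XMc: "X - M \<in> carrier_mat (dA'*dB') (dA'*dB')" using Mc by (rule minus_carrier_mat)
  have "(X - M) * Z = X * Z - M * Z" by (rule minus_mult_distrib_mat[OF Xc Mc Zc])
  then have XMZ: "(X - M) * Z = M - M" using XZ MZ by simp
  have RXR: "R * X * mat_adjoint R = (X - M) * 1\<^sub>m (dA'*dB') - (X - M) * Z"
  proof -
    have "R = 1\<^sub>m (dA'*dB') - Z" unfolding R_def Z_def ..
    then show ?thesis unfolding RA RX using mult_minus_distrib_mat[OF XMc one_carrier_mat Zc] by simp
  qed
  show ?thesis unfolding m1 RXR XMZ using Xc Mc by (intro eq_matI) auto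
qed


lemma add_zero_right: "A \<in> carrier_mat n m \<Longrightarrow> A + 0\<^sub>m n m = (A::complex mat)"
  by (intro eq_matI) auto

lemma key1: assumes a: "prop_a D" and b: "prop_b D"
  and VA: "VA \<in> carrier_mat dA' dA" and VB: "VB \<in> carrier_mat dB' dB"
  and iA: "mat_adjoint VA * VA = 1\<^sub>m dA" and iB: "mat_adjoint VB * VB = 1\<^sub>m dB"
  and R: "psd (dA*dB) \<rho>" and S: "psd dB \<sigma>"
  shows "D (kron VA VB * \<rho> * mat_adjoint (kron VA VB)) (kron (1\<^sub>m dA') (VB * \<sigma> * mat_adjoint VB)) \<le> D \<rho> (kron (1\<^sub>m dA) \<sigma>)"
proof -
  define W where "W = kron VA VB"
  define X where "X = kron (1\<^sub>m dA') (VB * \<sigma> * mat_adjoint VB)"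
  define Rm where "Rm = 1\<^sub>m (dA'*dB') - W * mat_adjoint W"
  define T where "T = kron (1\<^sub>m dA) \<sigma>"
  define T' where "T' = Rm * X * mat_adjoint Rm"
  have Wc: "W \<in> carrier_mat (dA'*dB') (dA*dB)" unfolding W_def using VA VB by simp
  have W': "mat_adjoint W \<in> carrier_mat (dA*dB) (dA'*dB')" using Wc by simp
  have iso: "mat_adjoint W * W = 1\<^sub>m (dA*dB)" unfolding W_def by (rule W_iso[OF VA VB iA iB])
  have Rcc: "\<rho> \<in> carrier_mat (dA*dB) (dA*dB)" using R by (rule psd_carrier)
  have Sc: "\<sigma> \<in> carrier_mat dB dB" using S by (rule psd_carrier)
  have Tp: "psd (dA*dB) T" unfolding T_def by (rule psd_kron1[OF S])
  have Tc: "T \<in> carrier_mat (dA*dB) (dA*dB)" using Tp by (rule psd_carrier)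
  have Yp: "psd dB' (VB * \<sigma> * mat_adjoint VB)" by (rule psd_congr[OF S VB])
  have Xp: "psd (dA'*dB') X" unfolding X_def by (rule psd_kron1[OF Yp])
  have Rmc: "Rm \<in> carrier_mat (dA'*dB') (dA'*dB')" unfolding Rm_def by (rule minus_carrier_mat, use Wc W' in simp)
  have T'p: "psd (dA'*dB') T'" unfolding T'_def by (rule psd_congr[OF Xp Rmc])
  have T'c: "T' \<in> carrier_mat (dA'*dB') (dA'*dB')" using T'p by (rule psd_carrier)
  let ?E = "\<lambda>X. (W * mat_adjoint (J1 (dA*dB) (dA'*dB'))) * X * mat_adjoint (W * mat_adjoint (J1 (dA*dB) (dA'*dB'))) + mat_adjoint (J2 (dA*dB) (dA'*dB')) * X * mat_adjoint (mat_adjoint (J2 (dA*dB) (dA'*dB')))"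
  have cp: "cptp (dA*dB + dA'*dB') (dA'*dB') ?E" by (rule chanF[OF Wc iso])
  have WRW: "W * \<rho> * mat_adjoint W \<in> carrier_mat (dA'*dB') (dA'*dB')"
    using mult_carrier_mat[OF mult_carrier_mat[OF Wc Rcc] W'] .
  have e1: "?E (four_block_mat \<rho> (0\<^sub>m (dA*dB) (dA'*dB')) (0\<^sub>m (dA'*dB') (dA*dB)) (0\<^sub>m (dA'*dB') (dA'*dB'))) = W * \<rho> * mat_adjoint W"
    using chanF_apply[OF Wc Rcc zero_carrier_mat zero_carrier_mat zero_carrier_mat] add_zero_right[OF WRW] by simp
  have e2: "?E (four_block_mat T (0\<^sub>m (dA*dB) (dA'*dB')) (0\<^sub>m (dA'*dB') (dA*dB)) T') = X"
    using chanF_apply[OF Wc Tc zero_carrier_mat zero_carrier_mat T'c] alg_F[OF VA VB iA iB Sc]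
    unfolding T'_def T_def X_def Rm_def W_def by simp
  have "D (?E (four_block_mat \<rho> (0\<^sub>m (dA*dB) (dA'*dB')) (0\<^sub>m (dA'*dB') (dA*dB)) (0\<^sub>m (dA'*dB') (dA'*dB'))))
          (?E (four_block_mat T (0\<^sub>m (dA*dB) (dA'*dB')) (0\<^sub>m (dA'*dB') (dA*dB)) T'))
     \<le> D (four_block_mat \<rho> (0\<^sub>m (dA*dB) (dA'*dB')) (0\<^sub>m (dA'*dB') (dA*dB)) (0\<^sub>m (dA'*dB') (dA'*dB')))
          (four_block_mat T (0\<^sub>m (dA*dB) (dA'*dB')) (0\<^sub>m (dA'*dB') (dA*dB)) T')"
    using a cp psd_fb[OF R psd_zero] psd_fb[OF Tp T'p] unfolding prop_a_def by blast
  also have "\<dots> = D \<rho> T" using b R Tp T'p unfolding prop_b_def by blast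
  finally show ?thesis unfolding e1 e2 unfolding W_def X_def T_def .
qed


lemma key2: assumes a: "prop_a D" and b: "prop_b D"
  and VA: "VA \<in> carrier_mat dA' dA" and VB: "VB \<in> carrier_mat dB' dB"
  and iA: "mat_adjoint VA * VA = 1\<^sub>m dA" and iB: "mat_adjoint VB * VB = 1\<^sub>m dB"
  and R: "psd (dA*dB) \<rho>" and S: "psd dB' \<sigma>"
  shows "D \<rho> (kron (1\<^sub>m dA) (mat_adjoint VB * \<sigma> * VB)) \<le> D (kron VA VB * \<rho> * mat_adjoint (kron VA VB)) (kron (1\<^sub>m dA') \<sigma>)"
proof -
  define W where "W = kron VA VB"
  define X where "X = kron (1\<^sub>m dA') \<sigma>"
  define Rm where "Rm = 1\<^sub>m (dA'*dB') - W * mat_adjoint W"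
  define \<rho>' where "\<rho>' = W * \<rho> * mat_adjoint W"
  have Wc: "W \<in> carrier_mat (dA'*dB') (dA*dB)" unfolding W_def using VA VB by simp
  have W': "mat_adjoint W \<in> carrier_mat (dA*dB) (dA'*dB')" using Wc by simp
  have VA': "mat_adjoint VA \<in> carrier_mat dA dA'" and VB': "mat_adjoint VB \<in> carrier_mat dB dB'" using VA VB by auto
  have iso: "mat_adjoint W * W = 1\<^sub>m (dA*dB)" unfolding W_def by (rule W_iso[OF VA VB iA iB])
  have Rcc: "\<rho> \<in> carrier_mat (dA*dB) (dA*dB)" using R by (rule psd_carrier)
  have Sc: "\<sigma> \<in> carrier_mat dB' dB'" using S by (rule psd_carrier)
  have Xp: "psd (dA'*dB') X" unfolding X_def by (rule psd_kron1[OF S])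
  have Xc: "X \<in> carrier_mat (dA'*dB') (dA'*dB')" using Xp by (rule psd_carrier)
  have \<rho>'p: "psd (dA'*dB') \<rho>'" unfolding \<rho>'_def by (rule psd_congr[OF R Wc])
  have \<rho>'c: "\<rho>' \<in> carrier_mat (dA'*dB') (dA'*dB')" using \<rho>'p by (rule psd_carrier)
  have P: "W * mat_adjoint W \<in> carrier_mat (dA'*dB') (dA'*dB')" using Wc W' by simp
  have Rmc: "Rm \<in> carrier_mat (dA'*dB') (dA'*dB')" unfolding Rm_def using P by (rule minus_carrier_mat)
  have s0p: "psd dB (mat_adjoint VB * \<sigma> * VB)" using psd_congr[OF S VB'] by simp
  have Tp: "psd (dA*dB) (kron (1\<^sub>m dA) (mat_adjoint VB * \<sigma> * VB))" by (rule psd_kron1[OF s0p])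
  have T''p: "psd (dA'*dB') (Rm * X * mat_adjoint Rm)" by (rule psd_congr[OF Xp Rmc])
  let ?E = "\<lambda>X. (J1 (dA*dB) (dA'*dB') * mat_adjoint W) * X * mat_adjoint (J1 (dA*dB) (dA'*dB') * mat_adjoint W) + (J2 (dA*dB) (dA'*dB') * Rm) * X * mat_adjoint (J2 (dA*dB) (dA'*dB') * Rm)"
  have cp: "cptp (dA'*dB') (dA*dB + dA'*dB') ?E" unfolding Rm_def by (rule chanG[OF Wc iso])
  have RW: "Rm * W = 0\<^sub>m (dA'*dB') (dA*dB)"
  proof -
    have "Rm * W = 1\<^sub>m (dA'*dB') * W - W * mat_adjoint W * W"
      unfolding Rm_def by (rule minus_mult_distrib_mat[OF one_carrier_mat P Wc])
    also have "W * mat_adjoint W * W = W * (mat_adjoint W * W)" by (rule assoc_mult_mat[OF Wc W' Wc])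
    finally show ?thesis using iso Wc by (intro eq_matI) auto
  qed
  have g1a: "mat_adjoint W * \<rho>' * W = \<rho>"
  proof -
    have WR: "W * \<rho> \<in> carrier_mat (dA'*dB') (dA*dB)" using mult_carrier_mat[OF Wc Rcc] .
    have WW: "mat_adjoint W * W \<in> carrier_mat (dA*dB) (dA*dB)" using mult_carrier_mat[OF W' Wc] .
    have "mat_adjoint W * \<rho>' * W = mat_adjoint W * (W * \<rho> * mat_adjoint W * W)"
      unfolding \<rho>'_def by (rule assoc_mult_mat[OF W' \<rho>'c[unfolded \<rho>'_def] Wc])
    also have "W * \<rho> * mat_adjoint W * W = (W * \<rho>) * (mat_adjoint W * W)"
      by (rule assoc_mult_mat[OF WR W' Wc])
    also have "mat_adjoint W * ((W * \<rho>) * (mat_adjoint W * W)) = (mat_adjoint W * (W * \<rho>)) * (mat_adjoint W * W)"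
      by (rule assoc_mult_mat[OF W' WR WW, symmetric])
    also have "mat_adjoint W * (W * \<rho>) = (mat_adjoint W * W) * \<rho>"
      by (rule assoc_mult_mat[OF W' Wc Rcc, symmetric])
    finally show ?thesis using iso Rcc by simp
  qed
  have g1b: "Rm * \<rho>' * mat_adjoint Rm = 0\<^sub>m (dA'*dB') (dA'*dB')"
  proof -
    have "Rm * \<rho>' = Rm * (W * (\<rho> * mat_adjoint W))"
      unfolding \<rho>'_def using assoc_mult_mat[OF Wc Rcc W'] by simp
    also have "\<dots> = (Rm * W) * (\<rho> * mat_adjoint W)"
      by (rule assoc_mult_mat[OF Rmc Wc mult_carrier_mat[OF Rcc W'], symmetric])
    finally have "Rm * \<rho>' = 0\<^sub>m (dA'*dB') (dA'*dB')" unfolding RW using Rcc W' by (intro eq_matI) auto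
    then show ?thesis using Rmc by (intro eq_matI) auto
  qed
  have g1: "?E \<rho>' = four_block_mat \<rho> (0\<^sub>m (dA*dB) (dA'*dB')) (0\<^sub>m (dA'*dB') (dA*dB)) (0\<^sub>m (dA'*dB') (dA'*dB'))"
    using chanG_apply[OF Wc \<rho>'c Rmc] g1a g1b by simp
  have g2a: "mat_adjoint W * X * W = kron (1\<^sub>m dA) (mat_adjoint VB * \<sigma> * VB)"
  proof -
    have "mat_adjoint W * X = kron (mat_adjoint VA * 1\<^sub>m dA') (mat_adjoint VB * \<sigma>)"
      unfolding W_def kron_adj X_def by (rule kron_mult[OF VA' VB' one_carrier_mat Sc])
    also have "mat_adjoint VA * 1\<^sub>m dA' = mat_adjoint VA" by (rule right_mult_one_mat[OF VA'])
    finally have "mat_adjoint W * X * W = kron (mat_adjoint VA) (mat_adjoint VB * \<sigma>) * kron VA VB" unfolding W_def by simp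
    also have "\<dots> = kron (mat_adjoint VA * VA) (mat_adjoint VB * \<sigma> * VB)"
      by (rule kron_mult[OF VA' mult_carrier_mat[OF VB' Sc] VA VB])
    finally show ?thesis using iA by simp
  qed
  have g2: "?E X = four_block_mat (kron (1\<^sub>m dA) (mat_adjoint VB * \<sigma> * VB)) (0\<^sub>m (dA*dB) (dA'*dB')) (0\<^sub>m (dA'*dB') (dA*dB)) (Rm * X * mat_adjoint Rm)"
    using chanG_apply[OF Wc Xc Rmc] g2a by simp
  have "D (?E \<rho>') (?E X) \<le> D \<rho>' X"
    using a cp \<rho>'p Xp unfolding prop_a_def by blast
  moreover have "D (?E \<rho>') (?E X) = D \<rho> (kron (1\<^sub>m dA) (mat_adjoint VB * \<sigma> * VB))"
    unfolding g1 g2 using b R Tp T''p unfolding prop_b_def by blast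
  ultimately show ?thesis unfolding \<rho>'_def W_def X_def by simp
qed



lemma sum_lessThan_add: "(\<Sum>i<n+(N::nat). f i) = (\<Sum>i<n. f i) + (\<Sum>i<N. f (n+i))"
  by (induction N) (simp_all add: add.assoc)

lemma mtrace_fb: assumes A: "A \<in> carrier_mat n n" and D: "D \<in> carrier_mat N N"
  shows "mtrace (four_block_mat A B C D) = mtrace A + mtrace D"
proof -
  have "mtrace (four_block_mat A B C D) = (\<Sum>i<n+N. four_block_mat A B C D $$ (i,i))"
    using A D unfolding mtrace_def by simp
  also have "\<dots> = (\<Sum>i<n. four_block_mat A B C D $$ (i,i)) + (\<Sum>i<N. four_block_mat A B C D $$ (n+i,n+i))"
    by (rule sum_lessThan_add)
  also have "(\<Sum>i<n. four_block_mat A B C D $$ (i,i)) = mtrace A"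
    using A D unfolding mtrace_def by (intro sum.cong) auto
  also have "(\<Sum>i<N. four_block_mat A B C D $$ (n+i,n+i)) = mtrace D"
    using A D unfolding mtrace_def by (intro sum.cong) auto
  finally show ?thesis .
qed

lemma iso_sandwich: assumes V: "(V::complex mat) \<in> carrier_mat m n" and iso: "mat_adjoint V * V = 1\<^sub>m n" and M: "M \<in> carrier_mat n n"
  shows "mat_adjoint V * (V * M * mat_adjoint V) * V = M"
proof -
  have V': "mat_adjoint V \<in> carrier_mat n m" using V by simp
  have VM: "V * M \<in> carrier_mat m n" using V M by simp
  have "mat_adjoint V * (V * M * mat_adjoint V) * V = (mat_adjoint V * (V * M) * mat_adjoint V) * V"
    using assoc_mult_mat[OF V' VM V'] by simp
  also have "mat_adjoint V * (V * M) = M" using assoc_mult_mat[OF V' V M] iso M by simp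
  also have "M * mat_adjoint V * V = M * (mat_adjoint V * V)" by (rule assoc_mult_mat[OF M V' V])
  finally show ?thesis using iso M by simp
qed

lemma keyeq: assumes a: "prop_a D" and b: "prop_b D"
  and VA: "VA \<in> carrier_mat dA' dA" and VB: "VB \<in> carrier_mat dB' dB"
  and iA: "mat_adjoint VA * VA = 1\<^sub>m dA" and iB: "mat_adjoint VB * VB = 1\<^sub>m dB"
  and R: "psd (dA*dB) \<rho>" and S: "psd dB \<sigma>"
  shows "D (kron VA VB * \<rho> * mat_adjoint (kron VA VB)) (kron (1\<^sub>m dA') (VB * \<sigma> * mat_adjoint VB)) = D \<rho> (kron (1\<^sub>m dA) \<sigma>)"
proof (rule antisym)
  show "D (kron VA VB * \<rho> * mat_adjoint (kron VA VB)) (kron (1\<^sub>m dA') (VB * \<sigma> * mat_adjoint VB)) \<le> D \<rho> (kron (1\<^sub>m dA) \<sigma>)"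
    by (rule key1[OF a b VA VB iA iB R S])
  have Sc: "\<sigma> \<in> carrier_mat dB dB" using S by (rule psd_carrier)
  have "D \<rho> (kron (1\<^sub>m dA) (mat_adjoint VB * (VB * \<sigma> * mat_adjoint VB) * VB)) \<le> D (kron VA VB * \<rho> * mat_adjoint (kron VA VB)) (kron (1\<^sub>m dA') (VB * \<sigma> * mat_adjoint VB))"
    by (rule key2[OF a b VA VB iA iB R psd_congr[OF S VB]])
  then show "D \<rho> (kron (1\<^sub>m dA) \<sigma>) \<le> D (kron VA VB * \<rho> * mat_adjoint (kron VA VB)) (kron (1\<^sub>m dA') (VB * \<sigma> * mat_adjoint VB))"
    unfolding iso_sandwich[OF VB iB Sc] .
qed


theorem lemma8:
  fixes D :: "complex mat \<Rightarrow> complex mat \<Rightarrow> ereal"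
    and dA dB dA' dB' :: nat and VA VB \<rho> :: "complex mat"
  assumes "prop_a D" and "prop_b D"
    and "isometry dA dA' VA" and "isometry dB dB' VB"
    and "density (dA * dB) \<rho>"
  shows "H_K1 D dA dB \<rho> =
           H_K1 D dA' dB' (kron VA VB * \<rho> * kron (mat_adjoint VA) (mat_adjoint VB)) \<and>
         H_K2 D dA dB \<rho> =
           H_K2 D dA' dB' (kron VA VB * \<rho> * kron (mat_adjoint VA) (mat_adjoint VB))"
proof -
  note a = assms(1) and b = assms(2)
  have VA: "VA \<in> carrier_mat dA' dA" and iA: "mat_adjoint VA * VA = 1\<^sub>m dA"
    using assms(3) unfolding isometry_def by auto
  have VB: "VB \<in> carrier_mat dB' dB" and iB: "mat_adjoint VB * VB = 1\<^sub>m dB"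
    using assms(4) unfolding isometry_def by auto
  have VB': "mat_adjoint VB \<in> carrier_mat dB dB'" using VB by simp
  have R: "psd (dA*dB) \<rho>" and trR: "mtrace \<rho> = 1" using assms(5) unfolding density_def by auto
  have Rc: "\<rho> \<in> carrier_mat (dA*dB) (dA*dB)" using R by (rule psd_carrier)
  have dB: "dB > 0"
  proof (rule ccontr)
    assume "\<not> dB > 0"
    then have "dim_row \<rho> = 0" using Rc by simp
    then have "mtrace \<rho> = 0" unfolding mtrace_def by simp
    then show False using trR by simp
  qed
  have adjW: "kron (mat_adjoint VA) (mat_adjoint VB) = mat_adjoint (kron VA VB)" by (simp add: kron_adj)
  define \<rho>' where "\<rho>' = kron VA VB * \<rho> * mat_adjoint (kron VA VB)"
  have part1: "H_K1 D dA dB \<rho> = H_K1 D dA' dB' \<rho>'"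
  proof -
    have "H_K1 D dA' dB' \<rho>' = - D \<rho>' (kron (1\<^sub>m dA') (VB * ptrace_A dA dB \<rho> * mat_adjoint VB))"
      unfolding H_K1_def \<rho>'_def by (simp add: ptrace_conj[OF VA VB Rc iA])
    also have "\<dots> = - D \<rho> (kron (1\<^sub>m dA) (ptrace_A dA dB \<rho>))"
      unfolding \<rho>'_def using keyeq[OF a b VA VB iA iB R psd_ptrace[OF R]] by simp
    finally show ?thesis unfolding H_K1_def by simp
  qed
  have part2: "H_K2 D dA dB \<rho> = H_K2 D dA' dB' \<rho>'"
    unfolding H_K2_def
  proof (rule antisym)
    show "(SUP \<sigma>\<in>{\<sigma>. density dB \<sigma>}. - D \<rho> (kron (1\<^sub>m dA) \<sigma>)) \<le> (SUP \<sigma>\<in>{\<sigma>. density dB' \<sigma>}. - D \<rho>' (kron (1\<^sub>m dA') \<sigma>))"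
    proof (rule SUP_least)
      fix \<sigma> assume "\<sigma> \<in> {\<sigma>. density dB \<sigma>}"
      then have S: "psd dB \<sigma>" and trS: "mtrace \<sigma> = 1" unfolding density_def by auto
      have Sc: "\<sigma> \<in> carrier_mat dB dB" using S by (rule psd_carrier)
      have "density dB' (VB * \<sigma> * mat_adjoint VB)"
        unfolding density_def
      proof
        show "psd dB' (VB * \<sigma> * mat_adjoint VB)" by (rule psd_congr[OF S VB])
        show "mtrace (VB * \<sigma> * mat_adjoint VB) = 1"
          using congr_trace[OF VB Sc] iB Sc trS by simp
      qed
      then have "- D \<rho>' (kron (1\<^sub>m dA') (VB * \<sigma> * mat_adjoint VB)) \<le> (SUP \<sigma>\<in>{\<sigma>. density dB' \<sigma>}. - D \<rho>' (kron (1\<^sub>m dA') \<sigma>))"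
        by (intro SUP_upper) simp
      moreover have "D \<rho>' (kron (1\<^sub>m dA') (VB * \<sigma> * mat_adjoint VB)) = D \<rho> (kron (1\<^sub>m dA) \<sigma>)"
        unfolding \<rho>'_def by (rule keyeq[OF a b VA VB iA iB R S])
      ultimately show "- D \<rho> (kron (1\<^sub>m dA) \<sigma>) \<le> (SUP \<sigma>\<in>{\<sigma>. density dB' \<sigma>}. - D \<rho>' (kron (1\<^sub>m dA') \<sigma>))"
        by simp
    qed
  next
    show "(SUP \<sigma>\<in>{\<sigma>. density dB' \<sigma>}. - D \<rho>' (kron (1\<^sub>m dA') \<sigma>)) \<le> (SUP \<sigma>\<in>{\<sigma>. density dB \<sigma>}. - D \<rho> (kron (1\<^sub>m dA) \<sigma>))"
    proof (rule SUP_least)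
      fix \<sigma>' assume "\<sigma>' \<in> {\<sigma>. density dB' \<sigma>}"
      then have S': "psd dB' \<sigma>'" and trS': "mtrace \<sigma>' = 1" unfolding density_def by auto
      have S'c: "\<sigma>' \<in> carrier_mat dB' dB'" using S' by (rule psd_carrier)
      define \<sigma>0 where "\<sigma>0 = mat_adjoint VB * \<sigma>' * VB"
      have s0p: "psd dB \<sigma>0" unfolding \<sigma>0_def using psd_congr[OF S' VB'] by simp
      have s0c: "\<sigma>0 \<in> carrier_mat dB dB" using s0p by (rule psd_carrier)
      define Rb where "Rb = 1\<^sub>m dB' - VB * mat_adjoint VB"
      have Rbc: "Rb \<in> carrier_mat dB' dB'" unfolding Rb_def by (rule minus_carrier_mat) (use VB VB' in simp)
      define t where "t = mtrace (Rb * \<sigma>' * mat_adjoint Rb)"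
      have tp: "t \<in> \<real>" "Re t \<ge> 0" unfolding t_def using psd_trace[OF psd_congr[OF S' Rbc]] by auto
      let ?G = "\<lambda>X. (J1 dB dB' * mat_adjoint VB) * X * mat_adjoint (J1 dB dB' * mat_adjoint VB) + (J2 dB dB' * Rb) * X * mat_adjoint (J2 dB dB' * Rb)"
      have cpG: "cptp dB' (dB + dB') ?G" unfolding Rb_def by (rule chanG[OF VB iB])
      have "mtrace (?G \<sigma>') = mtrace \<sigma>'" using cpG S'c unfolding cptp_def by blast
      moreover have "?G \<sigma>' = four_block_mat \<sigma>0 (0\<^sub>m dB dB') (0\<^sub>m dB' dB) (Rb * \<sigma>' * mat_adjoint Rb)"
        unfolding \<sigma>0_def by (rule chanG_apply[OF VB S'c Rbc])
      moreover have "Rb * \<sigma>' * mat_adjoint Rb \<in> carrier_mat dB' dB'"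
        using psd_carrier[OF psd_congr[OF S' Rbc]] .
      ultimately have tr0: "mtrace \<sigma>0 + t = 1" using mtrace_fb[OF s0c] trS' unfolding t_def by simp
      define c where "c = t / of_nat dB"
      have cp: "c \<in> \<real>" "Re c \<ge> 0" unfolding c_def using tp by auto
      define Z where "Z = c \<cdot>\<^sub>m 1\<^sub>m dB"
      have Zp: "psd dB Z" unfolding Z_def by (rule psd_smult[OF psd_one cp])
      have Zc: "Z \<in> carrier_mat dB dB" unfolding Z_def by simp
      define \<sigma> where "\<sigma> = \<sigma>0 + Z"
      have Sp: "psd dB \<sigma>" unfolding \<sigma>_def by (rule psd_add[OF s0p Zp])
      have "mtrace \<sigma> = mtrace \<sigma>0 + c * of_nat dB"
        unfolding \<sigma>_def Z_def using mtrace_add[OF s0c, of Z] Zc mtrace_smult[OF one_carrier_mat, of c dB] by (simp add: Z_def)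
      also have "\<dots> = 1" unfolding c_def using dB tr0 by simp
      finally have "density dB \<sigma>" unfolding density_def using Sp by simp
      then have up: "- D \<rho> (kron (1\<^sub>m dA) \<sigma>) \<le> (SUP \<sigma>\<in>{\<sigma>. density dB \<sigma>}. - D \<rho> (kron (1\<^sub>m dA) \<sigma>))"
        by (intro SUP_upper) simp
      have "kron (1\<^sub>m dA) \<sigma> = kron (1\<^sub>m dA) \<sigma>0 + kron (1\<^sub>m dA) Z"
        unfolding \<sigma>_def by (rule kron_add_right[OF s0c Zc])
      then have "D \<rho> (kron (1\<^sub>m dA) \<sigma>) \<le> D \<rho> (kron (1\<^sub>m dA) \<sigma>0)"
        using mono_D[OF a b R psd_kron1[OF s0p] psd_kron1[OF Zp]] by simp
      also have "\<dots> \<le> D \<rho>' (kron (1\<^sub>m dA') \<sigma>')"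
        unfolding \<sigma>0_def \<rho>'_def by (rule key2[OF a b VA VB iA iB R S'])
      finally have "- D \<rho>' (kron (1\<^sub>m dA') \<sigma>') \<le> - D \<rho> (kron (1\<^sub>m dA) \<sigma>)" by simp
      then show "- D \<rho>' (kron (1\<^sub>m dA') \<sigma>') \<le> (SUP \<sigma>\<in>{\<sigma>. density dB \<sigma>}. - D \<rho> (kron (1\<^sub>m dA) \<sigma>))"
        using up by (rule order_trans)
    qed
  qed
  show ?thesis using part1 part2 unfolding \<rho>'_def adjW by simp
qed


end
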